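(* Let $T=([d],E)$ be a rooted tree, let $\{r_e\}_{e\in E}$ be positive integers, and let $p:\prod_{k=1}^d[n_k]\to\mathbb{R}$. Suppose that for every edge $w\to k$ of $T$ (i.e. $k=\mathcal{P}(w)$) there are $\Phi_{w\to k}:\prod_{i\in\mathcal{L}(w)\cup\{w\}}[n_i]\times[r_{(w,k)}]\to\mathbb{R}$ and $\Psi_{w\to k}:[r_{(w,k)}]\times\prod_{i\in\mathcal{R}(w)}[n_i]\to\mathbb{R}$ with $$p(x_1,\dots,x_d)=\sum_{\alpha_{(w,k)}=1}^{r_{(w,k)}}\Phi_{w\to k}(x_{\mathcal{L}(w)\cup w},\alpha_{(w,k)})\,\Psi_{w\to k}(\alpha_{(w,k)},x_{\mathcal{R}(w)}),$$ where the unfolding matrix $p(x_{\mathcal{L}(w)\cup w};x_{\mathcal{R}(w)})$ has rank exactly $r_{(w,k)}$ (so that the unfoldings $\Phi_{w\to k}(x_{\mathcal{L}(w)\cup w};\alpha_{(w,k)})$ and $\Psi_{w\to k}(\alpha_{(w,k)};x_{\mathcal{R}(w)})$ have full column rank, resp. full row rank, $r_{(w,k)}$). For a non-leaf $k$ define $$\Phi_{\mathcal{C}(k)\to k}(x_{\mathcal{L}(k)},\alpha_{(k,\mathcal{C}(k))})=\prod_{w\in\mathcal{C}(k)}\Phi_{w\to k}(x_{\mathcal{L}(w)\cup w},\alpha_{(k,w)}).$$ Consider, for $k=1,\dots,d$, the following linear equations (Core Determining Equations) in the unknown $G_k:[n_k]\times\prod_{w\in\mathcal{N}(k)}[r_{(w,k)}]\to\mathbb{R}$: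 - if $k$ is a leaf: $G_k(x_k,\alpha_{(k,\mathcal{P}(k))})=\Phi_{k\to\mathcal{P}(k)}(x_k,\alpha_{(k,\mathcal{P}(k))})$; - if $k$ is the root: $\sum_{\alpha_{(k,\mathcal{C}(k))}}\Phi_{\mathcal{C}(k)\to k}(x_{\mathcal{L}(k)},\alpha_{(k,\mathcal{C}(k))})\,G_k(x_k,\alpha_{(k,\mathcal{N}(k))})=p(x_1,\dots,x_d)$ for all $x$; - otherwise: $\sum_{\alpha_{(k,\mathcal{C}(k))}}\Phi_{\mathcal{C}(k)\to k}(x_{\mathcal{L}(k)},\alpha_{(k,\mathcal{C}(k))})\,G_k(x_k,\alpha_{(k,\mathcal{N}(k))})=\Phi_{k\to\mathcal{P}(k)}(x_{\mathcal{L}(k)\cup k},\alpha_{(k,\mathcal{P}(k))})$ for all $x_{\mathcal{L}(k)\cup k},\alpha_{(k,\mathcal{P}(k))}$. Then each of these equations has a unique solution $G_k$ (it is solvable exactly, and the solution is unique), and $p$ admits a TTNS ansatz over the cores $\{G_k\}_{k=1}^d$, i.e. $$p(x_1,\dots,x_d)=\sum_{\alpha_e\in[r_e],\,e\in E}\ \prod_{k=1}^d G_k\big(x_k,\alpha_{(k,\mathcal{N}(k))}\big).$$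
   Context: $T=([d],E)$ is a tree on vertex set $[d]=\{1,\dots,d\}$ with a distinguished root. For a node $k$: $\mathcal{C}(k)$ is its set of children, $\mathcal{P}(k)$ its parent (empty for the root), $\mathcal{N}(k)=\mathcal{C}(k)\cup\mathcal{P}(k)$ its neighbors, $\mathcal{L}(k)$ the set of proper descendants of $k$, and $\mathcal{R}(k)=[d]\setminus(\mathcal{L}(k)\cup\{k\})$ the set of non-descendants. Edges are undirected; $(w,k)$ and $(k,w)$ denote the same edge, and $w\to k$ indicates that $k$ is the parent of $w$. Each variable $x_i$ ranges over $[n_i]$. For $\mathcal{S}=\{i_1,\dots,i_m\}\subset[d]$, $x_{\mathcal{S}}=(x_{i_1},\dots,x_{i_m})$, and $x_{\mathcal{S}\cup k}:=x_{\mathcal{S}\cup\{k\}}$; each edge $e$ carries an index $\alpha_e\in[r_e]$, and $\alpha_{(k,\mathcal{S})}=(\alpha_{(k,i)})_{i\in\mathcal{S}}$ for a set $\mathcal{S}$ of neighbors of $k$. For a tensor $f$ and a partition $\mathcal{U}\cup\mathcal{V}$ of its index set, $f(x_{\mathcal{U}};x_{\mathcal{V}})$ denotes the unfolding matrix with rows indexed by $x_{\mathcal{U}}$ and columns by $x_{\mathcal{V}}$. *)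

theory Defs
  imports "HOL-Analysis.Analysis" "HOL-Library.FuncSet" "HOL-Library.Function_Algebras"
begin

text \<open>The edge (w, par w)
  is identified with (indexed by) its child endpoint w, so the edge set E is
  {1..d} - {rt}.\<close>

definition tree_rel :: "nat \<Rightarrow> nat \<Rightarrow> (nat \<Rightarrow> nat) \<Rightarrow> (nat \<times> nat) set" where
  "tree_rel d rt par = {(w, par w) | w. w \<in> {1..d} \<and> w \<noteq> rt}"

definition rooted_tree :: "nat \<Rightarrow> nat \<Rightarrow> (nat \<Rightarrow> nat) \<Rightarrow> bool" where
  "rooted_tree d rt par \<longleftrightarrow> rt \<in> {1..d} \<and>
     (\<forall>w \<in> {1..d} - {rt}. par w \<in> {1..d} \<and> (w, rt) \<in> (tree_rel d rt par)\<^sup>+)"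

definition children :: "nat \<Rightarrow> nat \<Rightarrow> (nat \<Rightarrow> nat) \<Rightarrow> nat \<Rightarrow> nat set" where
  "children d rt par k = {w \<in> {1..d}. w \<noteq> rt \<and> par w = k}"

definition desc :: "nat \<Rightarrow> nat \<Rightarrow> (nat \<Rightarrow> nat) \<Rightarrow> nat \<Rightarrow> nat set" where
  "desc d rt par k = {j \<in> {1..d}. (j, k) \<in> (tree_rel d rt par)\<^sup>+}"

definition nondesc :: "nat \<Rightarrow> nat \<Rightarrow> (nat \<Rightarrow> nat) \<Rightarrow> nat \<Rightarrow> nat set" where
  "nondesc d rt par k = {1..d} - (desc d rt par k \<union> {k})"

definition nbr_edges :: "nat \<Rightarrow> nat \<Rightarrow> (nat \<Rightarrow> nat) \<Rightarrow> nat \<Rightarrow> nat set" where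
  "nbr_edges d rt par k = children d rt par k \<union> (if k = rt then {} else {k})"

abbreviation idx :: "nat set \<Rightarrow> (nat \<Rightarrow> nat) \<Rightarrow> (nat \<Rightarrow> nat) set" where
  "idx S n \<equiv> PiE S (\<lambda>i. {1..n i})"

definition glue :: "nat set \<Rightarrow> (nat \<Rightarrow> nat) \<Rightarrow> (nat \<Rightarrow> nat) \<Rightarrow> (nat \<Rightarrow> nat)" where
  "glue U u v = (\<lambda>i. if i \<in> U then u i else v i)"

text \<open>Rank of the unfolding matrix f(x_U; x_V): the dimension of the (real) span of its
  columns, each column being the function x_U \<mapsto> f(x_U, x_V) on prod_{i in U}[n_i].\<close>
definition unfolding_rank ::
  "(nat \<Rightarrow> nat) \<Rightarrow> ((nat \<Rightarrow> nat) \<Rightarrow> real) \<Rightarrow> nat set \<Rightarrow> nat set \<Rightarrow> nat" where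
  "unfolding_rank n f U V =
     vector_space.dim (\<lambda>(c::real) (g :: (nat \<Rightarrow> nat) \<Rightarrow> real) u. c * g u)
       ((\<lambda>v. (\<lambda>u. if u \<in> idx U n then f (glue U u v) else 0)) ` idx V n)"


definition Phi_children ::
  "nat \<Rightarrow> nat \<Rightarrow> (nat \<Rightarrow> nat) \<Rightarrow> (nat \<Rightarrow> (nat \<Rightarrow> nat) \<Rightarrow> nat \<Rightarrow> real) \<Rightarrow> nat
    \<Rightarrow> (nat \<Rightarrow> nat) \<Rightarrow> (nat \<Rightarrow> nat) \<Rightarrow> real" where
  "Phi_children d rt par Phi k x \<beta> =
     (\<Prod>w \<in> children d rt par k. Phi w (restrict x (desc d rt par w \<union> {w})) (\<beta> w))"

text \<open>A leaf is a non-root vertex without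
  children; for the root (including the case d = 1) the right-hand side is p.\<close>
definition cde ::
  "nat \<Rightarrow> nat \<Rightarrow> (nat \<Rightarrow> nat) \<Rightarrow> (nat \<Rightarrow> nat) \<Rightarrow> (nat \<Rightarrow> nat) \<Rightarrow> ((nat \<Rightarrow> nat) \<Rightarrow> real)
    \<Rightarrow> (nat \<Rightarrow> (nat \<Rightarrow> nat) \<Rightarrow> nat \<Rightarrow> real) \<Rightarrow> nat \<Rightarrow> (nat \<Rightarrow> (nat \<Rightarrow> nat) \<Rightarrow> real) \<Rightarrow> bool" where
  "cde d rt par n r p Phi k G \<longleftrightarrow>
     (if k \<noteq> rt \<and> children d rt par k = {} then
        (\<forall>xk \<in> {1..n k}. \<forall>a \<in> {1..r k}.
           G xk (\<lambda>e\<in>{k}. a) = Phi k (\<lambda>i\<in>{k}. xk) a)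
      else if k = rt then
        (\<forall>x \<in> idx {1..d} n.
           (\<Sum>\<beta> \<in> PiE (children d rt par k) (\<lambda>e. {1..r e}).
              Phi_children d rt par Phi k x \<beta> * G (x k) \<beta>) = p x)
      else
        (\<forall>x \<in> idx (desc d rt par k \<union> {k}) n. \<forall>a \<in> {1..r k}.
           (\<Sum>\<beta> \<in> PiE (children d rt par k) (\<lambda>e. {1..r e}).
              Phi_children d rt par Phi k x \<beta> * G (x k) (\<beta>(k := a))) = Phi k x a))"

definition same_core ::
  "nat \<Rightarrow> nat \<Rightarrow> (nat \<Rightarrow> nat) \<Rightarrow> (nat \<Rightarrow> nat) \<Rightarrow> (nat \<Rightarrow> nat) \<Rightarrow> nat
    \<Rightarrow> (nat \<Rightarrow> (nat \<Rightarrow> nat) \<Rightarrow> real) \<Rightarrow> (nat \<Rightarrow> (nat \<Rightarrow> nat) \<Rightarrow> real) \<Rightarrow> bool" where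
  "same_core d rt par n r k G G' \<longleftrightarrow>
     (\<forall>xk \<in> {1..n k}. \<forall>\<alpha> \<in> PiE (nbr_edges d rt par k) (\<lambda>e. {1..r e}). G xk \<alpha> = G' xk \<alpha>)"

end

theory Submission
  imports Defs
begin

lemma sum_PiE_insert:
  assumes "k \<notin> A"
  shows "(\<Sum>g\<in>PiE (insert k A) R. f g) = (\<Sum>b\<in>R k. \<Sum>g\<in>PiE A R. f (g(k:=b)))"
proof -
  have "(\<Sum>g\<in>PiE (insert k A) R. f g) = (\<Sum>p\<in>R k \<times> PiE A R. f ((\<lambda>(y, g). g(k := y)) p))"
    unfolding PiE_insert_eq by (subst sum.reindex[OF inj_combinator[OF assms]]) (simp add: o_def)
  also have "\<dots> = (\<Sum>b\<in>R k. \<Sum>g\<in>PiE A R. f (g(k:=b)))"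
    by (simp add: sum.cartesian_product split_def)
  finally show ?thesis .
qed

lemma glue_PiE: "a \<in> PiE A R \<Longrightarrow> b \<in> PiE B R \<Longrightarrow> glue A a b \<in> PiE (A \<union> B) R"
  by (auto simp: glue_def PiE_iff extensional_def)

lemma sum_PiE_Un:
  assumes "A \<inter> B = {}"
  shows "(\<Sum>g\<in>PiE (A \<union> B) R. f g) = (\<Sum>a\<in>PiE A R. \<Sum>b\<in>PiE B R. f (glue A a b))"
proof -
  let ?h = "\<lambda>(a,b). glue A a b"
  have inj: "inj_on ?h (PiE A R \<times> PiE B R)"
  proof (rule inj_onI, clarsimp)
    fix a b a' b' assume H: "a \<in> PiE A R" "b \<in> PiE B R" "a' \<in> PiE A R" "b' \<in> PiE B R"
      "glue A a b = glue A a' b'"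
    have "a = a'"
    proof
      fix i have "glue A a b i = glue A a' b' i" by (rule fun_cong[OF H(5)])
      then show "a i = a' i" using H
        by (cases "i \<in> A") (auto simp: glue_def PiE_iff extensional_def)
    qed
    moreover have "b = b'"
    proof
      fix i have "glue A a b i = glue A a' b' i" by (rule fun_cong[OF H(5)])
      then show "b i = b' i" using H assms
        by (cases "i \<in> A") (auto simp: glue_def PiE_iff extensional_def disjoint_iff)
    qed
    ultimately show "a = a' \<and> b = b'" by simp
  qed
  have img: "?h ` (PiE A R \<times> PiE B R) = PiE (A \<union> B) R"
  proof
    show "?h ` (PiE A R \<times> PiE B R) \<subseteq> PiE (A \<union> B) R"
    proof (rule image_subsetI)
      fix p assume "p \<in> PiE A R \<times> PiE B R"
      then show "?h p \<in> PiE (A \<union> B) R" by (cases p) (simp add: glue_PiE)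
    qed
  next
    show "PiE (A \<union> B) R \<subseteq> ?h ` (PiE A R \<times> PiE B R)"
    proof
      fix g assume g: "g \<in> PiE (A \<union> B) R"
      have "g = ?h (restrict g A, restrict g B)"
      proof (rule ext)
        fix i show "g i = ?h (restrict g A, restrict g B) i"
          using g by (cases "i \<in> A"; cases "i \<in> B") (auto simp: glue_def PiE_iff extensional_def)
      qed
      moreover have "(restrict g A, restrict g B) \<in> PiE A R \<times> PiE B R" using g by auto
      ultimately show "g \<in> ?h ` (PiE A R \<times> PiE B R)" by (rule image_eqI)
    qed
  qed
  have "(\<Sum>g\<in>PiE (A \<union> B) R. f g) = (\<Sum>p\<in>PiE A R \<times> PiE B R. f (?h p))"
    using sum.reindex[OF inj, of f] img by (simp add: o_def)
  also have "\<dots> = (\<Sum>a\<in>PiE A R. \<Sum>b\<in>PiE B R. f (glue A a b))"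
    by (simp add: sum.cartesian_product split_def)
  finally show ?thesis .
qed

lemma prod_sum_blocks:
  fixes F :: "nat \<Rightarrow> (nat \<Rightarrow> nat) \<Rightarrow> real"
  assumes "finite W" "\<And>w w'. w \<in> W \<Longrightarrow> w' \<in> W \<Longrightarrow> w \<noteq> w' \<Longrightarrow> B w \<inter> B w' = {}"
  shows "(\<Prod>w\<in>W. \<Sum>g\<in>PiE (B w) R. F w g) = (\<Sum>g\<in>PiE (\<Union>w\<in>W. B w) R. \<Prod>w\<in>W. F w (restrict g (B w)))"
  using assms
proof (induction W rule: finite_induct)
  case empty then show ?case by simp
next
  case (insert w0 W)
  have disj: "B w0 \<inter> (\<Union>w\<in>W. B w) = {}" using insert by blast
  have "(\<Sum>g\<in>PiE (\<Union>w\<in>insert w0 W. B w) R. \<Prod>w\<in>insert w0 W. F w (restrict g (B w)))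
     = (\<Sum>a\<in>PiE (B w0) R. \<Sum>b\<in>PiE (\<Union>w\<in>W. B w) R.
          \<Prod>w\<in>insert w0 W. F w (restrict (glue (B w0) a b) (B w)))"
    by (simp only: UN_insert sum_PiE_Un[OF disj])
  also have "\<dots> = (\<Sum>a\<in>PiE (B w0) R. \<Sum>b\<in>PiE (\<Union>w\<in>W. B w) R.
          F w0 a * (\<Prod>w\<in>W. F w (restrict b (B w))))"
  proof (intro sum.cong refl)
    fix a b assume a: "a \<in> PiE (B w0) R" and b: "b \<in> PiE (\<Union>w\<in>W. B w) R"
    have 1: "restrict (glue (B w0) a b) (B w0) = a" using a
      by (auto simp: glue_def PiE_iff extensional_def fun_eq_iff)
    have 2: "restrict (glue (B w0) a b) (B w) = restrict b (B w)" if "w \<in> W" for w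
      using that insert.prems insert.hyps by (auto simp: glue_def fun_eq_iff)
    show "(\<Prod>w\<in>insert w0 W. F w (restrict (glue (B w0) a b) (B w))) = F w0 a * (\<Prod>w\<in>W. F w (restrict b (B w)))"
    proof -
      have "(\<Prod>w\<in>insert w0 W. F w (restrict (glue (B w0) a b) (B w)))
          = F w0 (restrict (glue (B w0) a b) (B w0)) * (\<Prod>w\<in>W. F w (restrict (glue (B w0) a b) (B w)))"
        using insert.hyps by (rule_tac prod.insert) auto
      also have "(\<Prod>w\<in>W. F w (restrict (glue (B w0) a b) (B w))) = (\<Prod>w\<in>W. F w (restrict b (B w)))"
        by (rule prod.cong[OF refl]) (simp only: 2)
      finally show ?thesis by (simp only: 1)
    qed
  qed
  also have "\<dots> = (\<Sum>a\<in>PiE (B w0) R. F w0 a) * (\<Sum>b\<in>PiE (\<Union>w\<in>W. B w) R. \<Prod>w\<in>W. F w (restrict b (B w)))"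
    by (rule sum_product[symmetric])
  also have "(\<Sum>b\<in>PiE (\<Union>w\<in>W. B w) R. \<Prod>w\<in>W. F w (restrict b (B w))) = (\<Prod>w\<in>W. \<Sum>g\<in>PiE (B w) R. F w g)"
    using insert.IH insert.prems by (metis insertCI)
  finally show ?case using insert.hyps by simp
qed

context fixes d rt :: nat and par :: "nat \<Rightarrow> nat" begin

lemma R_iff: "(j,k) \<in> tree_rel d rt par \<longleftrightarrow> j \<in> {1..d} \<and> j \<noteq> rt \<and> k = par j"
  by (auto simp: tree_rel_def)

lemma trancl_first: "(j,k) \<in> (tree_rel d rt par)\<^sup>+ \<longleftrightarrow>
   j \<in> {1..d} \<and> j \<noteq> rt \<and> (par j = k \<or> (par j, k) \<in> (tree_rel d rt par)\<^sup>+)"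
proof
  assume "(j,k) \<in> (tree_rel d rt par)\<^sup>+"
  then show "j \<in> {1..d} \<and> j \<noteq> rt \<and> (par j = k \<or> (par j, k) \<in> (tree_rel d rt par)\<^sup>+)"
    by (cases rule: converse_tranclE) (auto simp: R_iff)
next
  assume H: "j \<in> {1..d} \<and> j \<noteq> rt \<and> (par j = k \<or> (par j, k) \<in> (tree_rel d rt par)\<^sup>+)"
  then have "(j, par j) \<in> tree_rel d rt par" by (simp add: R_iff)
  with H show "(j,k) \<in> (tree_rel d rt par)\<^sup>+"
    by (auto intro: trancl_into_trancl2)
qed

lemma rt_no_out: "(rt,k) \<notin> (tree_rel d rt par)\<^sup>+"
  using trancl_first by blast

lemma comparable:
  assumes "(j,a) \<in> (tree_rel d rt par)\<^sup>+"
  shows "(j,b) \<in> (tree_rel d rt par)\<^sup>+ \<Longrightarrow> a = b \<or> (a,b) \<in> (tree_rel d rt par)\<^sup>+ \<or> (b,a) \<in> (tree_rel d rt par)\<^sup>+"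
  using assms
proof (induction arbitrary: b rule: converse_trancl_induct)
  case (base y)
  then show ?case using trancl_first[of y b] by (auto simp: R_iff)
next
  case (step y z)
  from step.prems have "par y = b \<or> (par y, b) \<in> (tree_rel d rt par)\<^sup>+"
    using trancl_first by blast
  moreover have "z = par y" using step.hyps(1) by (simp add: R_iff)
  ultimately show ?case using step by auto
qed

context assumes tree: "rooted_tree d rt par" begin

lemma to_root: "w \<in> {1..d} - {rt} \<Longrightarrow> (w, rt) \<in> (tree_rel d rt par)\<^sup>+"
  using tree by (auto simp: rooted_tree_def)

lemma par_in: "w \<in> {1..d} - {rt} \<Longrightarrow> par w \<in> {1..d}"
  using tree by (auto simp: rooted_tree_def)

lemma rt_in: "rt \<in> {1..d}"
  using tree by (auto simp: rooted_tree_def)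

lemma acyclic: "(k,k) \<notin> (tree_rel d rt par)\<^sup>+"
proof
  assume kk: "(k,k) \<in> (tree_rel d rt par)\<^sup>+"
  then have k: "k \<in> {1..d}" "k \<noteq> rt" using trancl_first by blast+
  have claim: "(z,k) \<in> (tree_rel d rt par)\<^sup>+" if "(k,z) \<in> (tree_rel d rt par)\<^sup>+" for z
    using that
  proof (induction rule: trancl_induct)
    case (base y)
    then have "y = par k" by (simp add: R_iff)
    moreover have "par k = k \<or> (par k, k) \<in> (tree_rel d rt par)\<^sup>+" using kk trancl_first by blast
    ultimately show ?case using kk by auto
  next
    case (step y z)
    then have "z = par y" by (simp add: R_iff)
    moreover have "par y = k \<or> (par y, k) \<in> (tree_rel d rt par)\<^sup>+" using step.IH trancl_first by blast
    ultimately show ?case using kk by auto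
  qed
  have "(k, rt) \<in> (tree_rel d rt par)\<^sup>+" using to_root k by auto
  from claim[OF this] show False using rt_no_out by blast
qed

lemma k_notin_desc: "k \<notin> desc d rt par k"
  using acyclic by (simp add: desc_def)

lemma rt_notin_desc: "rt \<notin> desc d rt par k"
  using rt_no_out by (simp add: desc_def)

lemma desc_sub: "desc d rt par k \<subseteq> {1..d}"
  by (auto simp: desc_def)

lemma children_in: "w \<in> children d rt par k \<Longrightarrow> w \<in> {1..d} \<and> w \<noteq> rt \<and> par w = k"
  by (auto simp: children_def)

lemma finite_children: "finite (children d rt par k)"
  by (auto simp: children_def)

lemma desc_unfold: "desc d rt par k = (\<Union>w\<in>children d rt par k. desc d rt par w \<union> {w})"
proof
  show "desc d rt par k \<subseteq> (\<Union>w\<in>children d rt par k. desc d rt par w \<union> {w})"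
  proof
    fix j assume "j \<in> desc d rt par k"
    then have j: "j \<in> {1..d}" "(j,k) \<in> (tree_rel d rt par)\<^sup>+" by (auto simp: desc_def)
    from j(2) show "j \<in> (\<Union>w\<in>children d rt par k. desc d rt par w \<union> {w})"
    proof (cases rule: tranclE)
      case base then show ?thesis by (auto simp: R_iff children_def)
    next
      case (step w)
      then have "w \<in> children d rt par k" by (auto simp: R_iff children_def)
      with step j show ?thesis by (auto simp: desc_def)
    qed
  qed
next
  show "(\<Union>w\<in>children d rt par k. desc d rt par w \<union> {w}) \<subseteq> desc d rt par k"
  proof
    fix j assume "j \<in> (\<Union>w\<in>children d rt par k. desc d rt par w \<union> {w})"
    then obtain w where w: "w \<in> children d rt par k" "j \<in> desc d rt par w \<union> {w}" by blast
    then have wk: "(w,k) \<in> tree_rel d rt par" by (auto simp: R_iff children_def)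
    show "j \<in> desc d rt par k"
    proof (cases "j = w")
      case True then show ?thesis using wk w by (auto simp: desc_def children_def)
    next
      case False then show ?thesis using wk w by (auto simp: desc_def intro: trancl_into_trancl)
    qed
  qed
qed

lemma children_sub_desc: "children d rt par k \<subseteq> desc d rt par k"
  using desc_unfold by blast

lemma desc_child_sub: "w \<in> children d rt par k \<Longrightarrow> desc d rt par w \<union> {w} \<subseteq> desc d rt par k"
  using desc_unfold by blast

lemma children_disj:
  assumes w1: "w1 \<in> children d rt par k" and w2: "w2 \<in> children d rt par k" and ne: "w1 \<noteq> w2"
  shows "(desc d rt par w1 \<union> {w1}) \<inter> (desc d rt par w2 \<union> {w2}) = {}"
proof (rule ccontr)
  assume "(desc d rt par w1 \<union> {w1}) \<inter> (desc d rt par w2 \<union> {w2}) \<noteq> {}"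
  then obtain j where j1: "j = w1 \<or> (j,w1) \<in> (tree_rel d rt par)\<^sup>+" and j2: "j = w2 \<or> (j,w2) \<in> (tree_rel d rt par)\<^sup>+"
    by (auto simp: desc_def)
  have p1: "par w1 = k" and p2: "par w2 = k" using w1 w2 by (auto simp: children_def)
  have r1: "(w1,k) \<in> tree_rel d rt par" and r2: "(w2,k) \<in> tree_rel d rt par"
    using w1 w2 by (auto simp: R_iff children_def)
  have cmp: "(w1,w2) \<in> (tree_rel d rt par)\<^sup>+ \<or> (w2,w1) \<in> (tree_rel d rt par)\<^sup>+"
    using j1 j2 ne comparable by blast
  have no: False if a: "(u,v) \<in> (tree_rel d rt par)\<^sup>+" and ru: "(u,k) \<in> tree_rel d rt par"
     and rv: "(v,k) \<in> tree_rel d rt par" for u v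
  proof -
    have "par u = v \<or> (par u, v) \<in> (tree_rel d rt par)\<^sup>+" using a trancl_first by blast
    moreover have "par u = k" using ru by (simp add: R_iff)
    ultimately have "k = v \<or> (k,v) \<in> (tree_rel d rt par)\<^sup>+" by auto
    then have "(k,k) \<in> (tree_rel d rt par)\<^sup>+" using rv by (auto intro: trancl_into_trancl)
    then show False using acyclic by blast
  qed
  from cmp show False using no r1 r2 by blast
qed

lemma desc_rt: "desc d rt par rt = {1..d} - {rt}"
  using to_root rt_notin_desc by (auto simp: desc_def)

lemma children_of_desc:
  assumes "j \<in> desc d rt par c \<union> {c}"
  shows "children d rt par j \<subseteq> desc d rt par c"
proof
  fix w assume "w \<in> children d rt par j"
  then have "(w,j) \<in> tree_rel d rt par" "w \<in> {1..d}" by (auto simp: R_iff children_def)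
  then show "w \<in> desc d rt par c" using assms by (auto simp: desc_def intro: trancl_into_trancl2)
qed

lemma notin_children_of_desc: "j \<in> desc d rt par k \<Longrightarrow> k \<notin> children d rt par j"
proof
  assume "j \<in> desc d rt par k" "k \<in> children d rt par j"
  then have "(j,k) \<in> (tree_rel d rt par)\<^sup>+" "(k,j) \<in> tree_rel d rt par" by (auto simp: desc_def R_iff children_def)
  then have "(k,k) \<in> (tree_rel d rt par)\<^sup>+" by (auto intro: trancl_into_trancl2)
  then show False using acyclic by blast
qed

lemma k_notin_children: "k \<notin> children d rt par k"
proof
  assume "k \<in> children d rt par k"
  then have "(k,k) \<in> tree_rel d rt par" by (auto simp: R_iff children_def)
  then show False using acyclic by blast
qed

lemma desc_child_card: "w \<in> children d rt par k \<Longrightarrow> card (desc d rt par w) < card (desc d rt par k)"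
  using desc_child_sub[of w k] k_notin_desc[of w]
  by (intro psubset_card_mono) (auto intro: finite_subset[OF desc_sub])

end
end

interpretation FV: vector_space "\<lambda>(c::real) (g::(nat\<Rightarrow>nat)\<Rightarrow>real) u. c * g u"
  by unfold_locales (auto simp: fun_eq_iff algebra_simps)

lemma FV_sum_apply: "(\<Sum>a\<in>A. (f a :: (nat\<Rightarrow>nat)\<Rightarrow>real)) u = (\<Sum>a\<in>A. f a u)"
  by (induction A rule: infinite_finite_induct) auto

lemma FV_span_rep:
  assumes "finite E" "g \<in> FV.span (col ` E)"
  shows "\<exists>c. \<forall>u. g u = (\<Sum>v\<in>E. c v * col v u)"
  using assms(2)
proof (induction rule: FV.span_induct_alt)
  case base then show ?case by (intro exI[of _ "\<lambda>_. 0"]) simp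
next
  case (step c x y)
  then obtain v0 where v0: "v0 \<in> E" "x = col v0" by blast
  from step obtain cc where cc: "\<forall>u. y u = (\<Sum>v\<in>E. cc v * col v u)" by blast
  show ?case
  proof (intro exI[of _ "\<lambda>v. cc v + (if v = v0 then c else 0)"] allI)
    fix u
    have "(\<Sum>v\<in>E. (cc v + (if v = v0 then c else 0)) * col v u)
       = (\<Sum>v\<in>E. cc v * col v u) + (\<Sum>v\<in>E. (if v = v0 then c * col v u else 0))"
      by (simp add: sum.distrib distrib_right if_distrib[of "\<lambda>t. t * col _ u"] cong: if_cong)
    also have "(\<Sum>v\<in>E. (if v = v0 then c * col v u else 0)) = c * col v0 u"
      using v0 assms(1) by (simp add: sum.delta')
    finally show "((\<lambda>u. c * x u) + y) u = (\<Sum>v\<in>E. (cc v + (if v = v0 then c else 0)) * col v u)"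
      using cc v0 by simp
  qed
qed

lemma rank_lemma:
  fixes f :: "(nat\<Rightarrow>nat)\<Rightarrow>real" and Phi :: "(nat\<Rightarrow>nat) \<Rightarrow> nat \<Rightarrow> real"
    and Psi :: "nat \<Rightarrow> (nat\<Rightarrow>nat) \<Rightarrow> real"
  assumes fD: "finite D" and fE: "finite E"
    and fac: "\<And>u v. u \<in> D \<Longrightarrow> v \<in> E \<Longrightarrow> F u v = (\<Sum>a=1..r. Phi u a * Psi a v)"
    and rk: "FV.dim ((\<lambda>v. (\<lambda>u. if u \<in> D then F u v else 0)) ` E) = r"
  shows "\<forall>c. (\<forall>u\<in>D. (\<Sum>a=1..r. c a * Phi u a) = 0) \<longrightarrow> (\<forall>a\<in>{1..r}. c a = 0)"
    and "\<forall>a\<in>{1..r}. \<exists>c. \<forall>u\<in>D. Phi u a = (\<Sum>v\<in>E. c v * F u v)"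
proof -
  define col where "col v = (\<lambda>u. if u \<in> D then F u v else 0)" for v
  define phi where "phi a = (\<lambda>u. if u \<in> D then Phi u a else 0)" for a
  have col_eq: "col v = (\<Sum>a=1..r. (\<lambda>u. Psi a v * phi a u))" if "v \<in> E" for v
    using that by (auto simp: fun_eq_iff FV_sum_apply col_def phi_def fac mult.commute intro: sum.cong)
  have sub: "col ` E \<subseteq> FV.span (phi ` {1..r})"
  proof
    fix g assume "g \<in> col ` E"
    then obtain v where v: "v \<in> E" "g = col v" by blast
    show "g \<in> FV.span (phi ` {1..r})"
      unfolding v(2) col_eq[OF v(1)]
      by (intro FV.span_sum FV.span_scale FV.span_base) auto
  qed
  have rk': "FV.dim (col ` E) = r" using rk by (simp add: col_def)
  have le1: "r \<le> card (phi ` {1..r})" using FV.dim_le_card[OF sub] rk' by simp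
  have le3: "card (phi ` {1..r}) \<le> r" using card_image_le[of "{1..r}" phi] by simp
  have card: "card (phi ` {1..r}) = r" using le1 le3 by simp
  have inj: "inj_on phi {1..r}" by (rule eq_card_imp_inj_on) (use card in auto)
  have ind: "FV.independent (phi ` {1..r})"
  proof -
    obtain A where A: "A \<subseteq> phi ` {1..r}" "FV.independent A" "phi ` {1..r} \<subseteq> FV.span A"
      using FV.maximal_independent_subset by blast
    have fA: "finite A" using A(1) finite_subset by blast
    have "col ` E \<subseteq> FV.span A" using sub A(3) FV.span_mono FV.span_span
      by (metis (no_types, lifting) dual_order.trans FV.span_minimal FV.subspace_span)
    then have "r \<le> card A" using FV.dim_le_card[OF _ fA] rk' by metis
    moreover have "card A \<le> r" using card_mono[OF finite_imageI[OF finite_atLeastAtMost] A(1)] card by simp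
    ultimately have "A = phi ` {1..r}" using A(1) card by (intro card_subset_eq) auto
    then show ?thesis using A(2) by simp
  qed
  show "\<forall>c. (\<forall>u\<in>D. (\<Sum>a=1..r. c a * Phi u a) = 0) \<longrightarrow> (\<forall>a\<in>{1..r}. c a = 0)"
  proof (intro allI impI ballI, rule ccontr)
    fix c a assume H: "\<forall>u\<in>D. (\<Sum>a=1..r. c a * Phi u a) = 0" and a: "a \<in> {1..r}" and ca: "c a \<noteq> 0"
    define uu where "uu g = c (the_inv_into {1..r} phi g)" for g
    have "(\<Sum>g\<in>phi ` {1..r}. (\<lambda>u. uu g * g u)) = (\<Sum>b\<in>{1..r}. (\<lambda>u. uu (phi b) * phi b u))"
      by (rule sum.reindex[OF inj, unfolded o_def])
    also have "\<dots> = (\<Sum>b\<in>{1..r}. (\<lambda>u. c b * phi b u))"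
      using inj by (intro sum.cong refl) (simp add: uu_def the_inv_into_f_f)
    also have "\<dots> = 0"
      using H by (auto simp: fun_eq_iff FV_sum_apply phi_def if_distrib[of "\<lambda>t. c _ * t"] sum.If_cases cong: if_cong)
    finally have "FV.dependent (phi ` {1..r})"
      unfolding FV.dependent_finite[OF finite_imageI[OF finite_atLeastAtMost]]
      using a ca inj by (intro exI[of _ uu]) (auto simp: uu_def the_inv_into_f_f)
    then show False using ind by simp
  qed
  obtain A' where A': "A' \<subseteq> col ` E" "FV.independent A'" "col ` E \<subseteq> FV.span A'"
    using FV.maximal_independent_subset by blast
  have cA': "card A' = r" using FV.basis_card_eq_dim[OF A'(1) A'(3) A'(2)] rk' by simp
  have inspan: "phi a \<in> FV.span A'" if a: "a \<in> {1..r}" for a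
  proof (rule ccontr)
    assume na: "phi a \<notin> FV.span A'"
    have i1: "FV.independent (insert (phi a) A')" using FV.independent_insertI[OF na A'(2)] .
    have s1: "insert (phi a) A' \<subseteq> FV.span (phi ` {1..r})"
      using a A'(1) sub by (auto intro: FV.span_base)
    have b: "finite (insert (phi a) A') \<and> card (insert (phi a) A') \<le> card (phi ` {1..r})"
      by (rule FV.independent_span_bound[OF _ i1 s1]) simp
    have nA: "phi a \<notin> A'" using na FV.span_base by blast
    from b have "finite A'" by simp
    then have "card (insert (phi a) A') = Suc r" using nA cA' by simp
    with b card show False by simp
  qed
  show "\<forall>a\<in>{1..r}. \<exists>c. \<forall>u\<in>D. Phi u a = (\<Sum>v\<in>E. c v * F u v)"
  proof
    fix a assume a: "a \<in> {1..r}"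
    have "phi a \<in> FV.span (col ` E)" using inspan[OF a] A'(1) FV.span_mono by blast
    then have "\<exists>c. \<forall>u. phi a u = (\<Sum>v\<in>E. c v * col v u)" by (rule FV_span_rep[OF fE])
    then obtain c where c: "\<forall>u. phi a u = (\<Sum>v\<in>E. c v * col v u)" by blast
    show "\<exists>c. \<forall>u\<in>D. Phi u a = (\<Sum>v\<in>E. c v * F u v)"
    proof (intro exI[of _ c] ballI)
      fix u assume "u \<in> D"
      then show "Phi u a = (\<Sum>v\<in>E. c v * F u v)" using c[rule_format, of u] by (simp add: phi_def col_def)
    qed
  qed
qed

lemma ip_comb:
  fixes l :: "nat \<Rightarrow> 'u \<Rightarrow> real"
  shows "(\<Sum>u\<in>D. (\<Sum>a\<in>A. c a * l a u) * phi u b) = (\<Sum>a\<in>A. c a * (\<Sum>u\<in>D. l a u * phi u b))"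
  by (simp add: sum_distrib_right sum_distrib_left mult.assoc sum.swap[of _ D A])

lemma left_inverse:
  fixes phi :: "'u \<Rightarrow> nat \<Rightarrow> real"
  assumes fD: "finite D"
  shows "(\<forall>c. (\<forall>u\<in>D. (\<Sum>a=1..r. c a * phi u a) = 0) \<longrightarrow> (\<forall>a\<in>{1..r}. c a = 0)) \<Longrightarrow>
    \<exists>l. \<forall>a\<in>{1..r}. \<forall>b\<in>{1..r}. (\<Sum>u\<in>D. l a u * phi u b) = (if a = b then 1 else 0)"
proof (induction r)
  case 0 then show ?case by simp
next
  case (Suc r)
  let ?m = "Suc r"
  have indr: "\<forall>c. (\<forall>u\<in>D. (\<Sum>a=1..r. c a * phi u a) = 0) \<longrightarrow> (\<forall>a\<in>{1..r}. c a = 0)"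
  proof (intro allI impI)
    fix c assume H: "\<forall>u\<in>D. (\<Sum>a=1..r. c a * phi u a) = 0"
    have "\<forall>u\<in>D. (\<Sum>a=1..?m. (c(?m := 0)) a * phi u a) = 0"
    proof
      fix u assume "u \<in> D"
      have "(\<Sum>a=1..?m. (c(?m := 0)) a * phi u a) = (\<Sum>a=1..r. (c(?m := 0)) a * phi u a)"
        by (simp only: sum.cl_ivl_Suc) simp
      also have "\<dots> = (\<Sum>a=1..r. c a * phi u a)" by (intro sum.cong) auto
      finally show "(\<Sum>a=1..?m. (c(?m := 0)) a * phi u a) = 0" using H \<open>u \<in> D\<close> by simp
    qed
    then have "\<forall>a\<in>{1..?m}. (c(?m := 0)) a = 0" by (rule mp[OF spec[OF Suc.prems, of "c(?m := 0)"]])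
    then show "\<forall>a\<in>{1..r}. c a = 0"
    proof (intro ballI)
      fix a assume Z: "\<forall>a\<in>{1..?m}. (c(?m := 0)) a = 0" and a: "a \<in> {1..r}"
      have "a \<in> {1..?m}" using a by simp
      then have "(c(?m := 0)) a = 0" using Z by blast
      then show "c a = 0" using a by simp
    qed
  qed
  from Suc.IH[OF indr] obtain l where l: "\<forall>a\<in>{1..r}. \<forall>b\<in>{1..r}. (\<Sum>u\<in>D. l a u * phi u b) = (if a = b then 1 else 0)"
    by (elim exE)
  define ip where "ip f b = (\<Sum>u\<in>D. f u * phi u b)" for f b
  define psi where "psi u = phi u ?m - (\<Sum>a=1..r. ip (l a) ?m * phi u a)" for u
  have "\<exists>u0\<in>D. psi u0 \<noteq> 0"
  proof (rule ccontr)
    assume "\<not> (\<exists>u0\<in>D. psi u0 \<noteq> 0)"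
    then have Z: "\<forall>u\<in>D. psi u = 0" by blast
    define c where "c a = (if a = ?m then 1 else - ip (l a) ?m)" for a
    have "\<forall>u\<in>D. (\<Sum>a=1..?m. c a * phi u a) = 0"
    proof
      fix u assume u: "u \<in> D"
      have "(\<Sum>a=1..?m. c a * phi u a) = (\<Sum>a=1..r. c a * phi u a) + phi u ?m"
        by (simp add: c_def)
      also have "(\<Sum>a=1..r. c a * phi u a) = - (\<Sum>a=1..r. ip (l a) ?m * phi u a)"
        by (simp add: c_def sum_negf[symmetric])
      finally show "(\<Sum>a=1..?m. c a * phi u a) = 0" using Z u by (simp add: psi_def)
    qed
    then have "\<forall>a\<in>{1..?m}. c a = 0" by (rule mp[OF spec[OF Suc.prems, of c]])
    then have "c ?m = 0" by simp
    then show False by (simp add: c_def)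
  qed
  then obtain u0 where u0: "u0 \<in> D" "psi u0 \<noteq> 0" by blast
  define lm where "lm u = ((if u = u0 then 1 else 0) - (\<Sum>a=1..r. phi u0 a * l a u)) / psi u0" for u
  have ip_lm: "ip lm b = (phi u0 b - (\<Sum>a=1..r. phi u0 a * ip (l a) b)) / psi u0" for b
  proof -
    have "ip lm b = (\<Sum>u\<in>D. ((if u = u0 then 1 else 0) * phi u b - (\<Sum>a=1..r. phi u0 a * l a u) * phi u b)) / psi u0"
      by (simp add: ip_def lm_def sum_divide_distrib left_diff_distrib)
    also have "\<dots> = (phi u0 b - (\<Sum>a=1..r. phi u0 a * ip (l a) b)) / psi u0"
      using u0 fD by (simp add: sum_subtractf ip_comb ip_def if_distrib[of "\<lambda>t. t * _"] cong: if_cong)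
    finally show ?thesis .
  qed
  have lm_b: "ip lm b = 0" if b: "b \<in> {1..r}" for b
  proof -
    have "(\<Sum>a=1..r. phi u0 a * ip (l a) b) = (\<Sum>a=1..r. (if a = b then phi u0 a else 0))"
      using l b by (intro sum.cong) (auto simp: ip_def)
    also have "\<dots> = phi u0 b" using b by (simp add: sum.delta')
    finally show ?thesis by (simp add: ip_lm)
  qed
  have lm_m: "ip lm ?m = 1"
  proof -
    have "ip lm ?m = psi u0 / psi u0" by (simp add: ip_lm psi_def mult.commute)
    then show ?thesis using u0 by simp
  qed
  define l' where "l' a = (if a = ?m then lm else (\<lambda>u. l a u - ip (l a) ?m * lm u))" for a
  show ?case
  proof (intro exI[of _ l'] ballI)
    fix a b assume a: "a \<in> {1..?m}" and b: "b \<in> {1..?m}"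
    have ipl': "ip (\<lambda>u. l a u - ip (l a) ?m * lm u) b = ip (l a) b - ip (l a) ?m * ip lm b"
      by (simp add: ip_def left_diff_distrib sum_subtractf sum_distrib_left mult.assoc)
    show "(\<Sum>u\<in>D. l' a u * phi u b) = (if a = b then 1 else 0)"
    proof (cases "a = ?m")
      case True
      then show ?thesis using b lm_b lm_m by (cases "b = ?m") (auto simp: l'_def ip_def)
    next
      case False
      then have a': "a \<in> {1..r}" using a by auto
      show ?thesis
      proof (cases "b = ?m")
        case True then show ?thesis using False ipl' lm_m by (simp add: l'_def ip_def)
      next
        case False
        then have b': "b \<in> {1..r}" using b by auto
        show ?thesis using \<open>a \<noteq> ?m\<close> ipl' lm_b[OF b'] l a' b' by (simp add: l'_def ip_def)
      qed
    qed
  qed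
qed

lemma swap_mult: fixes f :: "'a \<Rightarrow> real" shows "(\<Sum>u\<in>A. f u * (\<Sum>b\<in>B. g u b * h b)) = (\<Sum>b\<in>B. (\<Sum>u\<in>A. f u * g u b) * h b)"
proof -
  have "(\<Sum>u\<in>A. f u * (\<Sum>b\<in>B. g u b * h b)) = (\<Sum>u\<in>A. \<Sum>b\<in>B. (f u * g u b) * h b)"
    by (simp add: sum_distrib_left mult_ac)
  also have "\<dots> = (\<Sum>b\<in>B. \<Sum>u\<in>A. (f u * g u b) * h b)" by (rule sum.swap)
  also have "\<dots> = (\<Sum>b\<in>B. (\<Sum>u\<in>A. f u * g u b) * h b)" by (simp add: sum_distrib_right)
  finally show ?thesis .
qed
lemma swap_mult2: fixes f :: "'a \<Rightarrow> real" shows "(\<Sum>u\<in>A. f u * (\<Sum>b\<in>B. g b * h u b)) = (\<Sum>b\<in>B. g b * (\<Sum>u\<in>A. f u * h u b))"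
proof -
  have "(\<Sum>u\<in>A. f u * (\<Sum>b\<in>B. g b * h u b)) = (\<Sum>u\<in>A. \<Sum>b\<in>B. g b * (f u * h u b))"
    by (simp add: sum_distrib_left mult_ac)
  also have "\<dots> = (\<Sum>b\<in>B. \<Sum>u\<in>A. g b * (f u * h u b))" by (rule sum.swap)
  also have "\<dots> = (\<Sum>b\<in>B. g b * (\<Sum>u\<in>A. f u * h u b))" by (simp add: sum_distrib_left)
  finally show ?thesis .
qed
lemma swap_mult3: fixes f :: "'a \<Rightarrow> real" shows "(\<Sum>u\<in>A. f u * (\<Sum>b\<in>B. g b * h u b)) = (\<Sum>b\<in>B. \<Sum>u\<in>A. g b * (f u * h u b))"
proof -
  have "(\<Sum>u\<in>A. f u * (\<Sum>b\<in>B. g b * h u b)) = (\<Sum>u\<in>A. \<Sum>b\<in>B. g b * (f u * h u b))"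
    by (simp add: sum_distrib_left mult_ac)
  also have "\<dots> = (\<Sum>b\<in>B. \<Sum>u\<in>A. g b * (f u * h u b))" by (rule sum.swap)
  finally show ?thesis .
qed

lemma restrict_glue1: "u \<in> PiE A R \<Longrightarrow> restrict (glue A u y) A = u"
  by (auto simp: glue_def PiE_iff extensional_def fun_eq_iff)

lemma restrict_glue2: "A \<inter> B = {} \<Longrightarrow> restrict (glue A u y) B = restrict y B"
  by (auto simp: glue_def fun_eq_iff)

lemma prod_indep:
  fixes f :: "nat \<Rightarrow> (nat\<Rightarrow>nat) \<Rightarrow> nat \<Rightarrow> real" and B :: "nat \<Rightarrow> nat set"
  assumes "finite W"
   and "\<And>w w'. w \<in> W \<Longrightarrow> w' \<in> W \<Longrightarrow> w \<noteq> w' \<Longrightarrow> B w \<inter> B w' = {}"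
   and "\<And>w c. w \<in> W \<Longrightarrow> (\<forall>u\<in>idx (B w) n. (\<Sum>a=1..r w. c a * f w u a) = 0) \<Longrightarrow> \<forall>a\<in>{1..r w}. c a = 0"
  shows "(\<forall>y\<in>idx (\<Union>w\<in>W. B w) n. (\<Sum>\<beta>\<in>PiE W (\<lambda>w. {1..r w}). C \<beta> * (\<Prod>w\<in>W. f w (restrict y (B w)) (\<beta> w))) = 0)
     \<Longrightarrow> \<forall>\<beta>\<in>PiE W (\<lambda>w. {1..r w}). C \<beta> = 0"
  using assms
proof (induction W arbitrary: C rule: finite_induct)
  case empty
  then show ?case by auto
next
  case (insert w0 W)
  let ?R = "\<lambda>w. {1..r w}"
  have disj0: "B w0 \<inter> B w = {}" if "w \<in> W" for w using insert.prems(2)[of w0 w] insert.hyps that by auto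
  have key: "C (\<beta>(w0 := a)) = 0" if \<beta>: "\<beta> \<in> PiE W ?R" and a: "a \<in> ?R w0" for \<beta> a
  proof -
    have "\<forall>y'\<in>idx (\<Union>w\<in>W. B w) n. (\<Sum>\<beta>\<in>PiE W ?R. C (\<beta>(w0 := a)) * (\<Prod>w\<in>W. f w (restrict y' (B w)) (\<beta> w))) = 0"
    proof
      fix y' assume y': "y' \<in> idx (\<Union>w\<in>W. B w) n"
      define c where "c a = (\<Sum>\<beta>\<in>PiE W ?R. C (\<beta>(w0 := a)) * (\<Prod>w\<in>W. f w (restrict y' (B w)) (\<beta> w)))" for a
      have "\<forall>u\<in>idx (B w0) n. (\<Sum>a=1..r w0. c a * f w0 u a) = 0"
      proof
        fix u assume u: "u \<in> idx (B w0) n"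
        let ?y = "glue (B w0) u y'"
        have y: "?y \<in> idx (\<Union>w\<in>insert w0 W. B w) n" using glue_PiE[OF u y'] by simp
        have r0: "restrict ?y (B w0) = u" by (rule restrict_glue1[OF u])
        have rw: "restrict ?y (B w) = restrict y' (B w)" if "w \<in> W" for w
          by (rule restrict_glue2[OF disj0[OF that]])
        have "0 = (\<Sum>\<beta>\<in>PiE (insert w0 W) ?R. C \<beta> * (\<Prod>w\<in>insert w0 W. f w (restrict ?y (B w)) (\<beta> w)))"
          by (rule bspec[OF insert.prems(1) y, symmetric])
        also have "\<dots> = (\<Sum>a\<in>?R w0. \<Sum>\<beta>\<in>PiE W ?R. C (\<beta>(w0:=a)) * (\<Prod>w\<in>insert w0 W. f w (restrict ?y (B w)) ((\<beta>(w0:=a)) w)))"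
          by (rule sum_PiE_insert[OF insert.hyps(2)])
        also have "\<dots> = (\<Sum>a\<in>?R w0. \<Sum>\<beta>\<in>PiE W ?R. C (\<beta>(w0:=a)) * (f w0 u a * (\<Prod>w\<in>W. f w (restrict y' (B w)) (\<beta> w))))"
        proof (intro sum.cong refl)
          fix a \<beta> assume "\<beta> \<in> PiE W ?R"
          have "(\<Prod>w\<in>insert w0 W. f w (restrict ?y (B w)) ((\<beta>(w0:=a)) w))
              = f w0 (restrict ?y (B w0)) a * (\<Prod>w\<in>W. f w (restrict ?y (B w)) ((\<beta>(w0:=a)) w))"
            using insert.hyps by simp
          also have "(\<Prod>w\<in>W. f w (restrict ?y (B w)) ((\<beta>(w0:=a)) w)) = (\<Prod>w\<in>W. f w (restrict y' (B w)) (\<beta> w))"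
            using insert.hyps rw by (intro prod.cong refl) auto
          finally have "(\<Prod>w\<in>insert w0 W. f w (restrict ?y (B w)) ((\<beta>(w0:=a)) w))
              = f w0 u a * (\<Prod>w\<in>W. f w (restrict y' (B w)) (\<beta> w))" by (simp only: r0)
          then show "C (\<beta>(w0:=a)) * (\<Prod>w\<in>insert w0 W. f w (restrict ?y (B w)) ((\<beta>(w0:=a)) w))
              = C (\<beta>(w0:=a)) * (f w0 u a * (\<Prod>w\<in>W. f w (restrict y' (B w)) (\<beta> w)))" by (rule arg_cong)
        qed
        also have "\<dots> = (\<Sum>a=1..r w0. c a * f w0 u a)"
          by (simp add: c_def sum_distrib_right sum_distrib_left mult_ac)
        finally show "(\<Sum>a=1..r w0. c a * f w0 u a) = 0" by simp
      qed
      then have "\<forall>a\<in>{1..r w0}. c a = 0" using insert.prems(3)[of w0 c] by simp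
      then show "(\<Sum>\<beta>\<in>PiE W ?R. C (\<beta>(w0 := a)) * (\<Prod>w\<in>W. f w (restrict y' (B w)) (\<beta> w))) = 0"
        using a by (simp add: c_def)
    qed
    moreover have "\<And>w w'. w \<in> W \<Longrightarrow> w' \<in> W \<Longrightarrow> w \<noteq> w' \<Longrightarrow> B w \<inter> B w' = {}"
      using insert.prems(2) by blast
    moreover have "\<And>w c. w \<in> W \<Longrightarrow> (\<forall>u\<in>idx (B w) n. (\<Sum>a=1..r w. c a * f w u a) = 0) \<Longrightarrow> \<forall>a\<in>{1..r w}. c a = 0"
      using insert.prems(3) by blast
    ultimately have "\<forall>\<beta>\<in>PiE W ?R. C (\<beta>(w0 := a)) = 0"
      by (rule insert.IH[of "\<lambda>\<beta>. C (\<beta>(w0 := a))"])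
    then show ?thesis using \<beta> by blast
  qed
  show ?case
  proof
    fix \<beta> assume \<beta>: "\<beta> \<in> PiE (insert w0 W) ?R"
    have "\<beta> = (restrict \<beta> W)(w0 := \<beta> w0)"
      using \<beta> insert.hyps by (auto simp: fun_eq_iff PiE_iff extensional_def)
    moreover have "restrict \<beta> W \<in> PiE W ?R" using \<beta> by auto
    moreover have "\<beta> w0 \<in> ?R w0" using \<beta> by auto
    ultimately show "C \<beta> = 0" using key by metis
  qed
qed

lemma restrict_glue_sub: "A \<subseteq> U \<Longrightarrow> restrict (glue U x v) A = restrict x A"
  by (auto simp: glue_def fun_eq_iff)

lemma glue_comm: "A \<inter> B = {} \<Longrightarrow> glue A u (glue B u' x) = glue B u' (glue A u x)"
  by (auto simp: glue_def fun_eq_iff)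

lemma restrict_ext: "v \<in> PiE V R \<Longrightarrow> restrict v V = v"
  by (auto simp: PiE_iff extensional_def fun_eq_iff)

locale TT =
  fixes d rt :: nat and par n r :: "nat \<Rightarrow> nat"
    and p :: "(nat \<Rightarrow> nat) \<Rightarrow> real"
    and Phi :: "nat \<Rightarrow> (nat \<Rightarrow> nat) \<Rightarrow> nat \<Rightarrow> real"
    and Psi :: "nat \<Rightarrow> nat \<Rightarrow> (nat \<Rightarrow> nat) \<Rightarrow> real"
  assumes tree: "rooted_tree d rt par"
    and r_pos: "\<forall>w \<in> {1..d} - {rt}. r w > 0"
    and factor: "\<forall>w \<in> {1..d} - {rt}. \<forall>x \<in> idx {1..d} n.
        p x = (\<Sum>a = 1..r w. Phi w (restrict x (desc d rt par w \<union> {w})) a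
                              * Psi w a (restrict x (nondesc d rt par w)))"
    and rank: "\<forall>w \<in> {1..d} - {rt}.
        unfolding_rank n p (desc d rt par w \<union> {w}) (nondesc d rt par w) = r w"

context TT begin

abbreviation "DU w \<equiv> desc d rt par w \<union> {w}"
abbreviation "CH k \<equiv> children d rt par k"
abbreviation "RR \<equiv> (\<lambda>e. {1..r e})"
abbreviation "XX \<equiv> idx {1..d} n"

lemmas kd = k_notin_desc[OF tree] and rtd = rt_notin_desc[OF tree] and dsub = desc_sub[OF tree]
  and chin = children_in[OF tree] and finch = finite_children[OF tree] and dunf = desc_unfold[OF tree]
  and chsub = children_sub_desc[OF tree] and dcs = desc_child_sub[OF tree] and chdisj = children_disj[OF tree]
  and drt = desc_rt[OF tree] and chod = children_of_desc[OF tree] and nchod = notin_children_of_desc[OF tree]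
  and knch = k_notin_children[OF tree] and dcc = desc_child_card[OF tree] and rtin = rt_in[OF tree]

lemma DU_sub: "k \<in> {1..d} \<Longrightarrow> DU k \<subseteq> {1..d}"
  using dsub by auto

lemma nondesc_eq: "nondesc d rt par k = {1..d} - DU k"
  by (simp add: nondesc_def)

lemma glue_X: "k \<in> {1..d} \<Longrightarrow> u \<in> idx (DU k) n \<Longrightarrow> v \<in> idx (nondesc d rt par k) n \<Longrightarrow> glue (DU k) u v \<in> XX"
proof -
  assume k: "k \<in> {1..d}" and u: "u \<in> idx (DU k) n" and v: "v \<in> idx (nondesc d rt par k) n"
  have "DU k \<union> nondesc d rt par k = {1..d}" using DU_sub[OF k] by (auto simp: nondesc_def)
  then show ?thesis using glue_PiE[OF u v] by simp
qed

lemma glue_X2: "A \<subseteq> {1..d} \<Longrightarrow> u \<in> idx A n \<Longrightarrow> x \<in> XX \<Longrightarrow> glue A u x \<in> XX"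
  using glue_PiE[of u A _ x "{1..d}"] by (simp add: Un_absorb1)

lemma rank_facts:
  assumes w: "w \<in> {1..d} - {rt}"
  shows "\<forall>c. (\<forall>u\<in>idx (DU w) n. (\<Sum>a=1..r w. c a * Phi w u a) = 0) \<longrightarrow> (\<forall>a\<in>{1..r w}. c a = 0)"
    and "\<forall>a\<in>{1..r w}. \<exists>c. \<forall>u\<in>idx (DU w) n. Phi w u a = (\<Sum>v\<in>idx (nondesc d rt par w) n. c v * p (glue (DU w) u v))"
proof -
  have wd: "w \<in> {1..d}" using w by simp
  have fD: "finite (idx (DU w) n)" using DU_sub[OF wd] by (intro finite_PiE) (auto intro: finite_subset)
  have fE: "finite (idx (nondesc d rt par w) n)" by (intro finite_PiE) (auto simp: nondesc_def)
  have fac: "p (glue (DU w) u v) = (\<Sum>a=1..r w. Phi w u a * Psi w a v)"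
    if u: "u \<in> idx (DU w) n" and v: "v \<in> idx (nondesc d rt par w) n" for u v
  proof -
    have x: "glue (DU w) u v \<in> XX" by (rule glue_X[OF wd u v])
    have r1: "restrict (glue (DU w) u v) (DU w) = u" by (rule restrict_glue1[OF u])
    have "restrict (glue (DU w) u v) (nondesc d rt par w) = restrict v (nondesc d rt par w)"
      by (rule restrict_glue2) (auto simp: nondesc_def)
    also have "\<dots> = v" by (rule restrict_ext[OF v])
    finally have r2: "restrict (glue (DU w) u v) (nondesc d rt par w) = v" .
    show ?thesis using factor w x r1 r2 by auto
  qed
  have rk: "FV.dim ((\<lambda>v. (\<lambda>u. if u \<in> idx (DU w) n then p (glue (DU w) u v) else 0)) ` idx (nondesc d rt par w) n) = r w"
    using bspec[OF rank w] unfolding unfolding_rank_def .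
  note R = rank_lemma[OF fD fE fac rk]
  show "\<forall>c. (\<forall>u\<in>idx (DU w) n. (\<Sum>a=1..r w. c a * Phi w u a) = 0) \<longrightarrow> (\<forall>a\<in>{1..r w}. c a = 0)"
    by (rule R(1))
  show "\<forall>a\<in>{1..r w}. \<exists>c. \<forall>u\<in>idx (DU w) n. Phi w u a = (\<Sum>v\<in>idx (nondesc d rt par w) n. c v * p (glue (DU w) u v))"
    by (rule R(2))
qed

lemma linv:
  assumes w: "w \<in> {1..d} - {rt}"
  shows "\<exists>l. \<forall>a\<in>{1..r w}. \<forall>b\<in>{1..r w}. (\<Sum>u\<in>idx (DU w) n. l a u * Phi w u b) = (if a = b then 1 else 0)"
proof -
  have wd: "w \<in> {1..d}" using w by simp
  have fD: "finite (idx (DU w) n)" using DU_sub[OF wd] by (intro finite_PiE) (auto intro: finite_subset)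
  show ?thesis by (rule left_inverse[OF fD rank_facts(1)[OF w]])
qed

end

context TT begin

lemma exists_H_gen:
  assumes k: "k \<in> {1..d}" and fS: "finite S"
  shows "S \<subseteq> CH k \<Longrightarrow> \<exists>H.
    (\<forall>x\<in>XX. p x = (\<Sum>\<beta>\<in>PiE S RR. (\<Prod>w\<in>S. Phi w (restrict x (DU w)) (\<beta> w)) * H \<beta> x))
  \<and> (\<forall>\<beta>\<in>PiE S RR. \<forall>x\<in>XX. \<forall>x'\<in>XX. (\<forall>i\<in>{1..d}. i \<notin> (\<Union>w\<in>S. DU w) \<longrightarrow> x i = x' i) \<longrightarrow> H \<beta> x = H \<beta> x')
  \<and> (\<forall>w\<in>CH k - S. \<exists>K. \<forall>\<beta>\<in>PiE S RR. \<forall>x\<in>XX.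
        H \<beta> x = (\<Sum>b=1..r w. Phi w (restrict x (DU w)) b * K \<beta> b x)
      \<and> (\<forall>b. \<forall>u\<in>idx (DU w) n. K \<beta> b (glue (DU w) u x) = K \<beta> b x))"
  using fS
proof (induction S rule: finite_induct)
  case empty
  show ?case
  proof (intro exI[of _ "\<lambda>\<beta> x. p x"] conjI ballI impI)
    fix x assume "x \<in> XX"
    then show "p x = (\<Sum>\<beta>\<in>PiE {} RR. (\<Prod>w\<in>{}. Phi w (restrict x (DU w)) (\<beta> w)) * p x)" by simp
  next
    fix \<beta> x x' assume x: "x \<in> XX" and x': "x' \<in> XX"
      and ag: "\<forall>i\<in>{1..d}. i \<notin> (\<Union>w\<in>{}. DU w) \<longrightarrow> x i = x' i"
    have "x = x'"
    proof
      fix i show "x i = x' i" using x x' ag by (cases "i \<in> {1..d}") (auto simp: PiE_iff extensional_def)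
    qed
    then show "p x = p x'" by simp
  next
    fix w assume w: "w \<in> CH k - {}"
    then have w': "w \<in> {1..d} - {rt}" using chin by auto
    show "\<exists>K. \<forall>\<beta>\<in>PiE {} RR. \<forall>x\<in>XX. p x = (\<Sum>b=1..r w. Phi w (restrict x (DU w)) b * K \<beta> b x)
      \<and> (\<forall>b. \<forall>u\<in>idx (DU w) n. K \<beta> b (glue (DU w) u x) = K \<beta> b x)"
    proof (intro exI[of _ "\<lambda>\<beta> b x. Psi w b (restrict x (nondesc d rt par w))"] ballI conjI allI)
      fix \<beta> x assume x: "x \<in> XX"
      show "p x = (\<Sum>b=1..r w. Phi w (restrict x (DU w)) b * Psi w b (restrict x (nondesc d rt par w)))"
        by (rule bspec[OF bspec[OF factor w'] x])
      fix b u assume u: "u \<in> idx (DU w) n"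
      show "Psi w b (restrict (glue (DU w) u x) (nondesc d rt par w)) = Psi w b (restrict x (nondesc d rt par w))"
        by (subst restrict_glue2) (auto simp: nondesc_def)
    qed
  qed
next
  case (insert w0 S)
  from insert.prems have S: "S \<subseteq> CH k" and w0: "w0 \<in> CH k" by auto
  from insert.IH[OF S] obtain H where HH:
    "(\<forall>x\<in>XX. p x = (\<Sum>\<beta>\<in>PiE S RR. (\<Prod>w\<in>S. Phi w (restrict x (DU w)) (\<beta> w)) * H \<beta> x)) \<and>
    (\<forall>\<beta>\<in>PiE S RR. \<forall>x\<in>XX. \<forall>x'\<in>XX. (\<forall>i\<in>{1..d}. i \<notin> (\<Union>w\<in>S. DU w) \<longrightarrow> x i = x' i) \<longrightarrow> H \<beta> x = H \<beta> x') \<and>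
    (\<forall>w\<in>CH k - S. \<exists>K. \<forall>\<beta>\<in>PiE S RR. \<forall>x\<in>XX.
        H \<beta> x = (\<Sum>b=1..r w. Phi w (restrict x (DU w)) b * K \<beta> b x)
      \<and> (\<forall>b. \<forall>u\<in>idx (DU w) n. K \<beta> b (glue (DU w) u x) = K \<beta> b x))"
    ..
  note Ha = HH[THEN conjunct1] and Hb = HH[THEN conjunct2, THEN conjunct1] and Hc = HH[THEN conjunct2, THEN conjunct2]
  have w0': "w0 \<in> {1..d} - {rt}" using w0 chin by auto
  have DU0: "DU w0 \<subseteq> {1..d}" using DU_sub w0' by auto
  have "w0 \<in> CH k - S" using w0 insert.hyps by auto
  from bspec[OF Hc this] obtain K0 where K0: "\<forall>\<beta>\<in>PiE S RR. \<forall>x\<in>XX.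
        H \<beta> x = (\<Sum>b=1..r w0. Phi w0 (restrict x (DU w0)) b * K0 \<beta> b x)
      \<and> (\<forall>b. \<forall>u\<in>idx (DU w0) n. K0 \<beta> b (glue (DU w0) u x) = K0 \<beta> b x)" ..
  from linv[OF w0'] obtain l0 where l0: "\<forall>a\<in>{1..r w0}. \<forall>b\<in>{1..r w0}.
     (\<Sum>u\<in>idx (DU w0) n. l0 a u * Phi w0 u b) = (if a = b then 1 else 0)" ..
  define H' where "H' \<beta>' x = (\<Sum>u\<in>idx (DU w0) n. l0 (\<beta>' w0) u * H (restrict \<beta>' S) (glue (DU w0) u x))" for \<beta>' x
  have disjw: "DU w0 \<inter> DU w = {}" if "w \<in> CH k" "w \<noteq> w0" for w
    using chdisj[OF w0 that(1)] that(2) by auto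
  have rS: "restrict (\<beta>(w0 := a)) S = \<beta>" if "\<beta> \<in> PiE S RR" for \<beta> a
    using that insert.hyps by (auto simp: fun_eq_iff PiE_iff extensional_def)
  have H'_K0: "H' (\<beta>(w0 := a)) x = K0 \<beta> a x" if \<beta>: "\<beta> \<in> PiE S RR" and x: "x \<in> XX" and a: "a \<in> {1..r w0}" for \<beta> x a
  proof -
    have "H' (\<beta>(w0 := a)) x = (\<Sum>u\<in>idx (DU w0) n. l0 a u * H \<beta> (glue (DU w0) u x))"
      by (simp add: H'_def rS[OF \<beta>])
    also have "\<dots> = (\<Sum>u\<in>idx (DU w0) n. l0 a u * (\<Sum>b=1..r w0. Phi w0 u b * K0 \<beta> b x))"
    proof (intro sum.cong refl)
      fix u assume u: "u \<in> idx (DU w0) n"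
      have gx: "glue (DU w0) u x \<in> XX" by (rule glue_X2[OF DU0 u x])
      have "H \<beta> (glue (DU w0) u x) = (\<Sum>b=1..r w0. Phi w0 (restrict (glue (DU w0) u x) (DU w0)) b * K0 \<beta> b (glue (DU w0) u x))"
        using bspec[OF bspec[OF K0 \<beta>] gx] by (rule conjunct1)
      also have "\<dots> = (\<Sum>b=1..r w0. Phi w0 u b * K0 \<beta> b x)"
      proof (intro sum.cong refl)
        fix b
        have "K0 \<beta> b (glue (DU w0) u x) = K0 \<beta> b x" using bspec[OF bspec[OF K0 \<beta>] x] u by blast
        then show "Phi w0 (restrict (glue (DU w0) u x) (DU w0)) b * K0 \<beta> b (glue (DU w0) u x) = Phi w0 u b * K0 \<beta> b x"
          by (simp only: restrict_glue1[OF u])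
      qed
      finally show "l0 a u * H \<beta> (glue (DU w0) u x) = l0 a u * (\<Sum>b=1..r w0. Phi w0 u b * K0 \<beta> b x)" by simp
    qed
    also have "\<dots> = (\<Sum>b=1..r w0. (\<Sum>u\<in>idx (DU w0) n. l0 a u * Phi w0 u b) * K0 \<beta> b x)"
      by (rule swap_mult)
    also have "\<dots> = (\<Sum>b=1..r w0. (if a = b then K0 \<beta> b x else 0))"
      using l0 a by (intro sum.cong refl) auto
    also have "\<dots> = K0 \<beta> a x" using a by (simp add: sum.delta)
    finally show ?thesis .
  qed
  have decomp: "H \<beta> x = (\<Sum>a=1..r w0. Phi w0 (restrict x (DU w0)) a * H' (\<beta>(w0 := a)) x)"
    if \<beta>: "\<beta> \<in> PiE S RR" and x: "x \<in> XX" for \<beta> x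
    using K0 \<beta> x H'_K0[OF \<beta> x] by simp
  show ?case
  proof (intro exI[of _ H'] conjI)
    show "\<forall>x\<in>XX. p x = (\<Sum>\<beta>\<in>PiE (insert w0 S) RR. (\<Prod>w\<in>insert w0 S. Phi w (restrict x (DU w)) (\<beta> w)) * H' \<beta> x)"
    proof
      fix x assume x: "x \<in> XX"
      have "p x = (\<Sum>\<beta>\<in>PiE S RR. (\<Prod>w\<in>S. Phi w (restrict x (DU w)) (\<beta> w)) *
                (\<Sum>a=1..r w0. Phi w0 (restrict x (DU w0)) a * H' (\<beta>(w0 := a)) x))"
        using Ha x decomp x by simp
      also have "\<dots> = (\<Sum>a=1..r w0. \<Sum>\<beta>\<in>PiE S RR. (\<Prod>w\<in>insert w0 S. Phi w (restrict x (DU w)) ((\<beta>(w0:=a)) w)) * H' (\<beta>(w0 := a)) x)"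
      proof -
        have "(\<Prod>w\<in>insert w0 S. Phi w (restrict x (DU w)) ((\<beta>(w0:=a)) w))
            = Phi w0 (restrict x (DU w0)) a * (\<Prod>w\<in>S. Phi w (restrict x (DU w)) (\<beta> w))" for \<beta> a
        proof -
          have "(\<Prod>w\<in>insert w0 S. Phi w (restrict x (DU w)) ((\<beta>(w0:=a)) w))
            = Phi w0 (restrict x (DU w0)) a * (\<Prod>w\<in>S. Phi w (restrict x (DU w)) ((\<beta>(w0:=a)) w))"
            using insert.hyps by simp
          also have "(\<Prod>w\<in>S. Phi w (restrict x (DU w)) ((\<beta>(w0:=a)) w)) = (\<Prod>w\<in>S. Phi w (restrict x (DU w)) (\<beta> w))"
            using insert.hyps by (intro prod.cong refl) auto
          finally show ?thesis .
        qed
        then show ?thesis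
          by (subst swap_mult3) (simp add: mult_ac)
      qed
      also have "\<dots> = (\<Sum>\<beta>\<in>PiE (insert w0 S) RR. (\<Prod>w\<in>insert w0 S. Phi w (restrict x (DU w)) (\<beta> w)) * H' \<beta> x)"
        by (rule sum_PiE_insert[OF insert.hyps(2), symmetric])
      finally show "p x = (\<Sum>\<beta>\<in>PiE (insert w0 S) RR. (\<Prod>w\<in>insert w0 S. Phi w (restrict x (DU w)) (\<beta> w)) * H' \<beta> x)" .
    qed
  next
    show "\<forall>\<beta>\<in>PiE (insert w0 S) RR. \<forall>x\<in>XX. \<forall>x'\<in>XX. (\<forall>i\<in>{1..d}. i \<notin> (\<Union>w\<in>insert w0 S. DU w) \<longrightarrow> x i = x' i) \<longrightarrow> H' \<beta> x = H' \<beta> x'"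
    proof (intro ballI impI)
      fix \<beta> x x' assume \<beta>: "\<beta> \<in> PiE (insert w0 S) RR" and x: "x \<in> XX" and x': "x' \<in> XX"
        and ag: "\<forall>i\<in>{1..d}. i \<notin> (\<Union>w\<in>insert w0 S. DU w) \<longrightarrow> x i = x' i"
      have \<beta>S: "restrict \<beta> S \<in> PiE S RR" using \<beta> by auto
      show "H' \<beta> x = H' \<beta> x'"
        unfolding H'_def
      proof (intro sum.cong refl arg_cong[where f="\<lambda>t. _ * t"])
        fix u assume u: "u \<in> idx (DU w0) n"
        have "\<forall>i\<in>{1..d}. i \<notin> (\<Union>w\<in>S. DU w) \<longrightarrow> glue (DU w0) u x i = glue (DU w0) u x' i"
          using ag by (auto simp: glue_def)
        then show "H (restrict \<beta> S) (glue (DU w0) u x) = H (restrict \<beta> S) (glue (DU w0) u x')"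
          using Hb \<beta>S glue_X2[OF DU0 u x] glue_X2[OF DU0 u x'] by blast
      qed
    qed
  next
    show "\<forall>w\<in>CH k - insert w0 S. \<exists>K. \<forall>\<beta>\<in>PiE (insert w0 S) RR. \<forall>x\<in>XX.
        H' \<beta> x = (\<Sum>b=1..r w. Phi w (restrict x (DU w)) b * K \<beta> b x)
      \<and> (\<forall>b. \<forall>u\<in>idx (DU w) n. K \<beta> b (glue (DU w) u x) = K \<beta> b x)"
    proof
      fix w assume w: "w \<in> CH k - insert w0 S"
      then have wS: "w \<in> CH k - S" and wne: "w \<noteq> w0" by auto
      have dj: "DU w0 \<inter> DU w = {}" using disjw[OF _ wne] w by auto
      have DUw: "DU w \<subseteq> {1..d}" using DU_sub chin w by auto
      from bspec[OF Hc wS] obtain Kw where Kw: "\<forall>\<beta>\<in>PiE S RR. \<forall>x\<in>XX.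
        H \<beta> x = (\<Sum>b=1..r w. Phi w (restrict x (DU w)) b * Kw \<beta> b x)
      \<and> (\<forall>b. \<forall>u\<in>idx (DU w) n. Kw \<beta> b (glue (DU w) u x) = Kw \<beta> b x)" ..
      show "\<exists>K. \<forall>\<beta>\<in>PiE (insert w0 S) RR. \<forall>x\<in>XX.
        H' \<beta> x = (\<Sum>b=1..r w. Phi w (restrict x (DU w)) b * K \<beta> b x)
      \<and> (\<forall>b. \<forall>u\<in>idx (DU w) n. K \<beta> b (glue (DU w) u x) = K \<beta> b x)"
      proof (intro exI[of _ "\<lambda>\<beta> b x. \<Sum>u\<in>idx (DU w0) n. l0 (\<beta> w0) u * Kw (restrict \<beta> S) b (glue (DU w0) u x)"] ballI conjI allI)
        fix \<beta> x assume \<beta>: "\<beta> \<in> PiE (insert w0 S) RR" and x: "x \<in> XX"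
        have \<beta>S: "restrict \<beta> S \<in> PiE S RR" using \<beta> by auto
        have "H' \<beta> x = (\<Sum>u\<in>idx (DU w0) n. l0 (\<beta> w0) u * (\<Sum>b=1..r w. Phi w (restrict x (DU w)) b * Kw (restrict \<beta> S) b (glue (DU w0) u x)))"
          unfolding H'_def
        proof (intro sum.cong refl arg_cong[where f="\<lambda>t. _ * t"])
          fix u assume u: "u \<in> idx (DU w0) n"
          have gx: "glue (DU w0) u x \<in> XX" by (rule glue_X2[OF DU0 u x])
          have rr: "restrict (glue (DU w0) u x) (DU w) = restrict x (DU w)" by (rule restrict_glue2[OF dj])
          have E1: "H (restrict \<beta> S) (glue (DU w0) u x) = (\<Sum>b=1..r w. Phi w (restrict (glue (DU w0) u x) (DU w)) b * Kw (restrict \<beta> S) b (glue (DU w0) u x))"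
            by (rule conjunct1[OF bspec[OF bspec[OF Kw \<beta>S] gx]])
          then show "H (restrict \<beta> S) (glue (DU w0) u x) = (\<Sum>b=1..r w. Phi w (restrict x (DU w)) b * Kw (restrict \<beta> S) b (glue (DU w0) u x))"
            by (simp only: rr)
        qed
        also have "\<dots> = (\<Sum>b=1..r w. Phi w (restrict x (DU w)) b * (\<Sum>u\<in>idx (DU w0) n. l0 (\<beta> w0) u * Kw (restrict \<beta> S) b (glue (DU w0) u x)))"
          by (rule swap_mult2)
        finally show "H' \<beta> x = (\<Sum>b=1..r w. Phi w (restrict x (DU w)) b * (\<Sum>u\<in>idx (DU w0) n. l0 (\<beta> w0) u * Kw (restrict \<beta> S) b (glue (DU w0) u x)))" .
        fix b u' assume u': "u' \<in> idx (DU w) n"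
        show "(\<Sum>u\<in>idx (DU w0) n. l0 (\<beta> w0) u * Kw (restrict \<beta> S) b (glue (DU w0) u (glue (DU w) u' x)))
            = (\<Sum>u\<in>idx (DU w0) n. l0 (\<beta> w0) u * Kw (restrict \<beta> S) b (glue (DU w0) u x))"
        proof (intro sum.cong refl arg_cong[where f="\<lambda>t. _ * t"])
          fix u assume u: "u \<in> idx (DU w0) n"
          have gx: "glue (DU w0) u x \<in> XX" by (rule glue_X2[OF DU0 u x])
          have gc: "glue (DU w0) u (glue (DU w) u' x) = glue (DU w) u' (glue (DU w0) u x)" by (rule glue_comm[OF dj])
          have "Kw (restrict \<beta> S) b (glue (DU w) u' (glue (DU w0) u x)) = Kw (restrict \<beta> S) b (glue (DU w0) u x)"
            by (rule conjunct2[OF bspec[OF bspec[OF Kw \<beta>S] gx], rule_format, OF u'])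
          then show "Kw (restrict \<beta> S) b (glue (DU w0) u (glue (DU w) u' x)) = Kw (restrict \<beta> S) b (glue (DU w0) u x)"
            by (simp only: gc)
        qed
      qed
    qed
  qed
qed

end

lemma upd_PiE: "y \<in> PiE A R \<Longrightarrow> xk \<in> R k \<Longrightarrow> y(k := xk) \<in> PiE (insert k A) R"
  by (auto simp: PiE_iff extensional_def)

lemma upd_restrict: "k \<notin> B \<Longrightarrow> restrict (y(k := xk)) B = restrict y B"
  by (auto simp: fun_eq_iff)

context TT begin

abbreviation "INTc k G \<equiv> (\<forall>x\<in>idx (DU k) n. \<forall>a\<in>{1..r k}.
   (\<Sum>\<beta>\<in>PiE (CH k) RR. Phi_children d rt par Phi k x \<beta> * G (x k) (\<beta>(k := a))) = Phi k x a)"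

lemma PC_eq: "Phi_children d rt par Phi k x \<beta> = (\<Prod>w\<in>CH k. Phi w (restrict x (DU w)) (\<beta> w))"
  by (simp add: Phi_children_def)

lemma cde_root: "cde d rt par n r p Phi rt G \<longleftrightarrow>
   (\<forall>x\<in>XX. (\<Sum>\<beta>\<in>PiE (CH rt) RR. Phi_children d rt par Phi rt x \<beta> * G (x rt) \<beta>) = p x)"
  by (simp add: cde_def)

lemma cde_nonroot:
  assumes k: "k \<in> {1..d} - {rt}"
  shows "cde d rt par n r p Phi k G \<longleftrightarrow> INTc k G"
proof (cases "CH k = {}")
  case False
  then show ?thesis using k by (simp add: cde_def)
next
  case True
  have dk: "desc d rt par k = {}" using dunf[of k] True by simp
  have L: "cde d rt par n r p Phi k G \<longleftrightarrow>
     (\<forall>xk \<in> {1..n k}. \<forall>a \<in> {1..r k}. G xk (\<lambda>e\<in>{k}. a) = Phi k (\<lambda>i\<in>{k}. xk) a)"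
    using k True by (simp add: cde_def)
  have upd: "(\<lambda>_. undefined)(k := a) = (\<lambda>e\<in>{k}. a)" for a :: nat by (auto simp: fun_eq_iff)
  have R: "INTc k G \<longleftrightarrow> (\<forall>x\<in>idx {k} n. \<forall>a\<in>{1..r k}. G (x k) (\<lambda>e\<in>{k}. a) = Phi k x a)"
    using True dk by (simp add: Phi_children_def upd)
  have xe: "x = (\<lambda>i\<in>{k}. x k)" if "x \<in> idx {k} n" for x
    using that by (auto simp: PiE_iff extensional_def fun_eq_iff)
  show ?thesis unfolding L R
  proof (intro iffI ballI)
    fix x a assume H: "\<forall>xk\<in>{1..n k}. \<forall>a\<in>{1..r k}. G xk (\<lambda>e\<in>{k}. a) = Phi k (\<lambda>i\<in>{k}. xk) a"
      and x: "x \<in> idx {k} n" and a: "a \<in> {1..r k}"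
    have "x k \<in> {1..n k}" using x by auto
    then have "G (x k) (\<lambda>e\<in>{k}. a) = Phi k (\<lambda>i\<in>{k}. x k) a" using H a by simp
    then show "G (x k) (\<lambda>e\<in>{k}. a) = Phi k x a" using xe[OF x] by simp
  next
    fix xk a assume H: "\<forall>x\<in>idx {k} n. \<forall>a\<in>{1..r k}. G (x k) (\<lambda>e\<in>{k}. a) = Phi k x a"
      and xk: "xk \<in> {1..n k}" and a: "a \<in> {1..r k}"
    have "(\<lambda>i\<in>{k}. xk) \<in> idx {k} n" using xk by auto
    from bspec[OF bspec[OF H this] a] show "G xk (\<lambda>e\<in>{k}. a) = Phi k (\<lambda>i\<in>{k}. xk) a" by simp
  qed
qed

lemma exists_H:
  assumes k: "k \<in> {1..d}"
  obtains H where
    "\<forall>x\<in>XX. p x = (\<Sum>\<beta>\<in>PiE (CH k) RR. (\<Prod>w\<in>CH k. Phi w (restrict x (DU w)) (\<beta> w)) * H \<beta> x)"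
    "\<forall>\<beta>\<in>PiE (CH k) RR. \<forall>x\<in>XX. \<forall>x'\<in>XX. (\<forall>i\<in>{1..d}. i \<notin> desc d rt par k \<longrightarrow> x i = x' i) \<longrightarrow> H \<beta> x = H \<beta> x'"
proof -
  have U: "(\<Union>w\<in>CH k. DU w) = desc d rt par k" using dunf[of k] by simp
  from exists_H_gen[OF k finch[of k] subset_refl] obtain H where
    A1: "\<forall>x\<in>XX. p x = (\<Sum>\<beta>\<in>PiE (CH k) RR. (\<Prod>w\<in>CH k. Phi w (restrict x (DU w)) (\<beta> w)) * H \<beta> x)"
   and A2: "\<forall>\<beta>\<in>PiE (CH k) RR. \<forall>x\<in>XX. \<forall>x'\<in>XX. (\<forall>i\<in>{1..d}. i \<notin> (\<Union>w\<in>CH k. DU w) \<longrightarrow> x i = x' i) \<longrightarrow> H \<beta> x = H \<beta> x'"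
    by (elim exE conjE) (rule that)
  show ?thesis by (rule that[OF A1 A2[unfolded U]])
qed

lemma exists_nonroot:
  assumes k: "k \<in> {1..d} - {rt}"
  shows "\<exists>G. INTc k G"
proof -
  have kd': "k \<in> {1..d}" using k by simp
  obtain H where Ha: "\<forall>x\<in>XX. p x = (\<Sum>\<beta>\<in>PiE (CH k) RR. (\<Prod>w\<in>CH k. Phi w (restrict x (DU w)) (\<beta> w)) * H \<beta> x)"
    and Hb: "\<forall>\<beta>\<in>PiE (CH k) RR. \<forall>x\<in>XX. \<forall>x'\<in>XX. (\<forall>i\<in>{1..d}. i \<notin> desc d rt par k \<longrightarrow> x i = x' i) \<longrightarrow> H \<beta> x = H \<beta> x'"
    by (rule exists_H[OF kd'])
  from rank_facts(2)[OF k] obtain cf where cf: "\<forall>a\<in>{1..r k}. \<forall>u\<in>idx (DU k) n.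
      Phi k u a = (\<Sum>v\<in>idx (nondesc d rt par k) n. cf a v * p (glue (DU k) u v))"
    by (rule bchoice[THEN exE]) blast
  define G where "G xk \<alpha> = (\<Sum>v\<in>idx (nondesc d rt par k) n. cf (\<alpha> k) v *
      H (restrict \<alpha> (CH k)) (glue (DU k) (SOME y. y \<in> idx (DU k) n \<and> y k = xk) v))" for xk \<alpha>
  show ?thesis
  proof (intro exI[of _ G] ballI)
    fix x a assume x: "x \<in> idx (DU k) n" and a: "a \<in> {1..r k}"
    define y0 where "y0 = (SOME y. y \<in> idx (DU k) n \<and> y k = x k)"
    have y0: "y0 \<in> idx (DU k) n \<and> y0 k = x k" unfolding y0_def by (rule someI[of _ x]) (use x in simp)
    let ?E = "idx (nondesc d rt par k) n"
    let ?P = "\<lambda>\<beta>. \<Prod>w\<in>CH k. Phi w (restrict x (DU w)) (\<beta> w)"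
    have Gv: "G (x k) (\<beta>(k := a)) = (\<Sum>v\<in>?E. cf a v * H \<beta> (glue (DU k) y0 v))" if \<beta>: "\<beta> \<in> PiE (CH k) RR" for \<beta>
    proof -
      have "restrict (\<beta>(k := a)) (CH k) = \<beta>"
        using \<beta> knch[of k] by (auto simp: fun_eq_iff PiE_iff extensional_def)
      then show ?thesis by (simp add: G_def y0_def)
    qed
    have "Phi k x a = (\<Sum>v\<in>?E. cf a v * p (glue (DU k) x v))" by (rule bspec[OF bspec[OF cf a] x])
    also have "\<dots> = (\<Sum>v\<in>?E. cf a v * (\<Sum>\<beta>\<in>PiE (CH k) RR. ?P \<beta> * H \<beta> (glue (DU k) y0 v)))"
    proof (intro sum.cong refl arg_cong[where f="\<lambda>t. _ * t"])
      fix v assume v: "v \<in> ?E"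
      have gx: "glue (DU k) x v \<in> XX" by (rule glue_X[OF kd' x v])
      have gy: "glue (DU k) y0 v \<in> XX" using glue_X[OF kd' _ v] y0 by blast
      have "p (glue (DU k) x v) = (\<Sum>\<beta>\<in>PiE (CH k) RR. (\<Prod>w\<in>CH k. Phi w (restrict (glue (DU k) x v) (DU w)) (\<beta> w)) * H \<beta> (glue (DU k) x v))"
        by (rule bspec[OF Ha gx])
      also have "\<dots> = (\<Sum>\<beta>\<in>PiE (CH k) RR. ?P \<beta> * H \<beta> (glue (DU k) y0 v))"
      proof (intro sum.cong refl)
        fix \<beta> assume \<beta>: "\<beta> \<in> PiE (CH k) RR"
        have "(\<Prod>w\<in>CH k. Phi w (restrict (glue (DU k) x v) (DU w)) (\<beta> w)) = ?P \<beta>"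
        proof (intro prod.cong refl)
          fix w assume "w \<in> CH k"
          then have "DU w \<subseteq> DU k" using dcs[of w k] by auto
          then show "Phi w (restrict (glue (DU k) x v) (DU w)) (\<beta> w) = Phi w (restrict x (DU w)) (\<beta> w)"
            by (simp only: restrict_glue_sub)
        qed
        moreover have "H \<beta> (glue (DU k) x v) = H \<beta> (glue (DU k) y0 v)"
        proof -
          have "\<forall>i\<in>{1..d}. i \<notin> desc d rt par k \<longrightarrow> glue (DU k) x v i = glue (DU k) y0 v i"
            using y0 by (auto simp: glue_def)
          then show ?thesis using bspec[OF bspec[OF bspec[OF Hb \<beta>] gx] gy] by blast
        qed
        ultimately show "(\<Prod>w\<in>CH k. Phi w (restrict (glue (DU k) x v) (DU w)) (\<beta> w)) * H \<beta> (glue (DU k) x v)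
          = ?P \<beta> * H \<beta> (glue (DU k) y0 v)" by simp
      qed
      finally show "p (glue (DU k) x v) = (\<Sum>\<beta>\<in>PiE (CH k) RR. ?P \<beta> * H \<beta> (glue (DU k) y0 v))" .
    qed
    also have "\<dots> = (\<Sum>\<beta>\<in>PiE (CH k) RR. ?P \<beta> * (\<Sum>v\<in>?E. cf a v * H \<beta> (glue (DU k) y0 v)))"
      by (rule swap_mult2)
    also have "\<dots> = (\<Sum>\<beta>\<in>PiE (CH k) RR. Phi_children d rt par Phi k x \<beta> * G (x k) (\<beta>(k := a)))"
      by (intro sum.cong refl) (simp add: Gv PC_eq)
    finally show "(\<Sum>\<beta>\<in>PiE (CH k) RR. Phi_children d rt par Phi k x \<beta> * G (x k) (\<beta>(k := a))) = Phi k x a" by simp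
  qed
qed

lemma exists_root: "\<exists>G. cde d rt par n r p Phi rt G"
proof -
  obtain H where Ha: "\<forall>x\<in>XX. p x = (\<Sum>\<beta>\<in>PiE (CH rt) RR. (\<Prod>w\<in>CH rt. Phi w (restrict x (DU w)) (\<beta> w)) * H \<beta> x)"
    and Hb: "\<forall>\<beta>\<in>PiE (CH rt) RR. \<forall>x\<in>XX. \<forall>x'\<in>XX. (\<forall>i\<in>{1..d}. i \<notin> desc d rt par rt \<longrightarrow> x i = x' i) \<longrightarrow> H \<beta> x = H \<beta> x'"
    by (rule exists_H[OF rtin])
  define G where "G xk \<beta> = H \<beta> (SOME y. y \<in> XX \<and> y rt = xk)" for xk \<beta>
  show ?thesis unfolding cde_root
  proof (intro exI[of _ G] ballI)
    fix x assume x: "x \<in> XX"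
    define y0 where "y0 = (SOME y. y \<in> XX \<and> y rt = x rt)"
    have y0: "y0 \<in> XX \<and> y0 rt = x rt" unfolding y0_def by (rule someI[of _ x]) (use x in simp)
    have "p x = (\<Sum>\<beta>\<in>PiE (CH rt) RR. Phi_children d rt par Phi rt x \<beta> * H \<beta> x)" using Ha x by (simp add: PC_eq)
    also have "\<dots> = (\<Sum>\<beta>\<in>PiE (CH rt) RR. Phi_children d rt par Phi rt x \<beta> * G (x rt) \<beta>)"
    proof (intro sum.cong refl arg_cong[where f="\<lambda>t. _ * t"])
      fix \<beta> assume \<beta>: "\<beta> \<in> PiE (CH rt) RR"
      have "\<forall>i\<in>{1..d}. i \<notin> desc d rt par rt \<longrightarrow> x i = y0 i" using y0 drt by auto
      then have "H \<beta> x = H \<beta> y0" using bspec[OF bspec[OF bspec[OF Hb \<beta>] x], of y0] y0 by blast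
      then show "H \<beta> x = G (x rt) \<beta>" by (simp add: G_def y0_def)
    qed
    finally show "(\<Sum>\<beta>\<in>PiE (CH rt) RR. Phi_children d rt par Phi rt x \<beta> * G (x rt) \<beta>) = p x" by simp
  qed
qed

end

lemma prod_if_all:
  fixes f :: "'a \<Rightarrow> real"
  shows "finite A \<Longrightarrow> (\<Prod>c\<in>A. (if P c then f c else 0)) = (if \<forall>c\<in>A. P c then (\<Prod>c\<in>A. f c) else 0)"
  by (induction A rule: finite_induct) auto

lemma restrict_PiE_sub: "x \<in> PiE I R \<Longrightarrow> A \<subseteq> I \<Longrightarrow> restrict x A \<in> PiE A R"
  by auto

context TT begin

lemma nbr_nonroot: "k \<noteq> rt \<Longrightarrow> nbr_edges d rt par k = insert k (CH k)"
  by (auto simp: nbr_edges_def)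

lemma nbr_root: "nbr_edges d rt par rt = CH rt"
  by (auto simp: nbr_edges_def)

lemma finite_desc: "finite (desc d rt par k)"
  using dsub finite_subset by blast

lemma prod_desc: "(\<Prod>j\<in>desc d rt par k. f j) = (\<Prod>c\<in>CH k. \<Prod>j\<in>DU c. (f j :: real))"
proof -
  have "(\<Prod>j\<in>desc d rt par k. f j) = (\<Prod>j\<in>(\<Union>c\<in>CH k. DU c). f j)" using dunf[of k] by simp
  also have "\<dots> = (\<Prod>c\<in>CH k. \<Prod>j\<in>DU c. f j)"
    by (rule prod.UNION_disjoint) (use finch finite_desc chdisj in auto)
  finally show ?thesis .
qed

lemma unique_nonroot:
  assumes k: "k \<in> {1..d} - {rt}" and G: "INTc k G" and G': "INTc k G'"
  shows "same_core d rt par n r k G G'"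
  unfolding same_core_def
proof (intro ballI)
  fix xk \<alpha> assume xk: "xk \<in> {1..n k}" and \<alpha>: "\<alpha> \<in> PiE (nbr_edges d rt par k) RR"
  have \<alpha>': "\<alpha> \<in> PiE (insert k (CH k)) RR" using \<alpha> nbr_nonroot k by simp
  define a where "a = \<alpha> k"
  have a: "a \<in> {1..r k}" using \<alpha>' by (auto simp: a_def)
  define \<beta>0 where "\<beta>0 = restrict \<alpha> (CH k)"
  have \<beta>0: "\<beta>0 \<in> PiE (CH k) RR" using \<alpha>' by (auto simp: \<beta>0_def)
  have \<alpha>eq: "\<beta>0(k := a) = \<alpha>" using \<alpha>' by (auto simp: \<beta>0_def a_def fun_eq_iff PiE_iff extensional_def)
  define C where "C \<beta> = G xk (\<beta>(k := a)) - G' xk (\<beta>(k := a))" for \<beta>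
  have prem: "\<forall>y\<in>idx (\<Union>w\<in>CH k. DU w) n.
      (\<Sum>\<beta>\<in>PiE (CH k) RR. C \<beta> * (\<Prod>w\<in>CH k. Phi w (restrict y (DU w)) (\<beta> w))) = 0"
  proof
    fix y assume "y \<in> idx (\<Union>w\<in>CH k. DU w) n"
    then have y: "y \<in> idx (desc d rt par k) n" using dunf[of k] by simp
    define x where "x = y(k := xk)"
    have x: "x \<in> idx (DU k) n" using upd_PiE[OF y, of xk] xk by (simp add: x_def)
    have xk': "x k = xk" by (simp add: x_def)
    have PC: "Phi_children d rt par Phi k x \<beta> = (\<Prod>w\<in>CH k. Phi w (restrict y (DU w)) (\<beta> w))" for \<beta>
    proof -
      have "restrict x (DU w) = restrict y (DU w)" if "w \<in> CH k" for w
        using dcs[OF that] kd[of k] unfolding x_def by (intro upd_restrict) auto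
      then show ?thesis by (simp add: PC_eq)
    qed
    have e1: "(\<Sum>\<beta>\<in>PiE (CH k) RR. Phi_children d rt par Phi k x \<beta> * G (x k) (\<beta>(k := a))) = Phi k x a"
      using bspec[OF bspec[OF G x] a] .
    have e2: "(\<Sum>\<beta>\<in>PiE (CH k) RR. Phi_children d rt par Phi k x \<beta> * G' (x k) (\<beta>(k := a))) = Phi k x a"
      using bspec[OF bspec[OF G' x] a] .
    have "(\<Sum>\<beta>\<in>PiE (CH k) RR. C \<beta> * (\<Prod>w\<in>CH k. Phi w (restrict y (DU w)) (\<beta> w)))
       = (\<Sum>\<beta>\<in>PiE (CH k) RR. Phi_children d rt par Phi k x \<beta> * G (x k) (\<beta>(k := a)))
       - (\<Sum>\<beta>\<in>PiE (CH k) RR. Phi_children d rt par Phi k x \<beta> * G' (x k) (\<beta>(k := a)))"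
      unfolding sum_subtractf[symmetric] by (intro sum.cong refl) (simp add: C_def PC xk' algebra_simps)
    then show "(\<Sum>\<beta>\<in>PiE (CH k) RR. C \<beta> * (\<Prod>w\<in>CH k. Phi w (restrict y (DU w)) (\<beta> w))) = 0"
      using e1 e2 by simp
  qed
  have ind: "\<And>w c. w \<in> CH k \<Longrightarrow> (\<forall>u\<in>idx (DU w) n. (\<Sum>a=1..r w. c a * Phi w u a) = 0) \<Longrightarrow> \<forall>a\<in>{1..r w}. c a = 0"
  proof -
    fix w c assume w: "w \<in> CH k" and h: "\<forall>u\<in>idx (DU w) n. (\<Sum>a=1..r w. c a * Phi w u a) = 0"
    have wd: "w \<in> {1..d} - {rt}" using chin[OF w] by auto
    show "\<forall>a\<in>{1..r w}. c a = 0" by (rule mp[OF spec[OF rank_facts(1)[OF wd], of c] h])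
  qed
  have "\<forall>\<beta>\<in>PiE (CH k) RR. C \<beta> = 0"
    by (rule prod_indep[where W="CH k" and B="\<lambda>w. DU w" and f=Phi and r=r and n=n and C=C, OF finch chdisj ind prem])
  then have "C \<beta>0 = 0" using \<beta>0 by blast
  then show "G xk \<alpha> = G' xk \<alpha>" using \<alpha>eq by (simp add: C_def)
qed

lemma unique_root:
  assumes G: "cde d rt par n r p Phi rt G" and G': "cde d rt par n r p Phi rt G'"
  shows "same_core d rt par n r rt G G'"
  unfolding same_core_def nbr_root
proof (intro ballI)
  fix xk \<alpha> assume xk: "xk \<in> {1..n rt}" and \<alpha>: "\<alpha> \<in> PiE (CH rt) RR"
  define C where "C \<beta> = G xk \<beta> - G' xk \<beta>" for \<beta>
  have prem: "\<forall>y\<in>idx (\<Union>w\<in>CH rt. DU w) n.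
      (\<Sum>\<beta>\<in>PiE (CH rt) RR. C \<beta> * (\<Prod>w\<in>CH rt. Phi w (restrict y (DU w)) (\<beta> w))) = 0"
  proof
    fix y assume "y \<in> idx (\<Union>w\<in>CH rt. DU w) n"
    then have y: "y \<in> idx (desc d rt par rt) n" using dunf[of rt] by simp
    define x where "x = y(rt := xk)"
    have ins: "insert rt (desc d rt par rt) = {1..d}" unfolding drt using rtin by (rule insert_Diff)
    have "x \<in> idx (insert rt (desc d rt par rt)) n" unfolding x_def by (rule upd_PiE[OF y]) (use xk in simp)
    then have x: "x \<in> XX" by (simp only: ins)
    have xk': "x rt = xk" by (simp add: x_def)
    have PC: "Phi_children d rt par Phi rt x \<beta> = (\<Prod>w\<in>CH rt. Phi w (restrict y (DU w)) (\<beta> w))" for \<beta>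
    proof -
      have "restrict x (DU w) = restrict y (DU w)" if "w \<in> CH rt" for w
        using dcs[OF that] kd[of rt] unfolding x_def by (intro upd_restrict) auto
      then show ?thesis by (simp add: PC_eq)
    qed
    have e1: "(\<Sum>\<beta>\<in>PiE (CH rt) RR. Phi_children d rt par Phi rt x \<beta> * G (x rt) \<beta>) = p x"
      using bspec[OF G[unfolded cde_root] x] .
    have e2: "(\<Sum>\<beta>\<in>PiE (CH rt) RR. Phi_children d rt par Phi rt x \<beta> * G' (x rt) \<beta>) = p x"
      using bspec[OF G'[unfolded cde_root] x] .
    have "(\<Sum>\<beta>\<in>PiE (CH rt) RR. C \<beta> * (\<Prod>w\<in>CH rt. Phi w (restrict y (DU w)) (\<beta> w)))
       = (\<Sum>\<beta>\<in>PiE (CH rt) RR. Phi_children d rt par Phi rt x \<beta> * G (x rt) \<beta>)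
       - (\<Sum>\<beta>\<in>PiE (CH rt) RR. Phi_children d rt par Phi rt x \<beta> * G' (x rt) \<beta>)"
      unfolding sum_subtractf[symmetric] by (intro sum.cong refl) (simp add: C_def PC xk' algebra_simps)
    then show "(\<Sum>\<beta>\<in>PiE (CH rt) RR. C \<beta> * (\<Prod>w\<in>CH rt. Phi w (restrict y (DU w)) (\<beta> w))) = 0"
      using e1 e2 by simp
  qed
  have ind: "\<And>w c. w \<in> CH rt \<Longrightarrow> (\<forall>u\<in>idx (DU w) n. (\<Sum>a=1..r w. c a * Phi w u a) = 0) \<Longrightarrow> \<forall>a\<in>{1..r w}. c a = 0"
  proof -
    fix w c assume w: "w \<in> CH rt" and h: "\<forall>u\<in>idx (DU w) n. (\<Sum>a=1..r w. c a * Phi w u a) = 0"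
    have wd: "w \<in> {1..d} - {rt}" using chin[OF w] by auto
    show "\<forall>a\<in>{1..r w}. c a = 0" by (rule mp[OF spec[OF rank_facts(1)[OF wd], of c] h])
  qed
  have "\<forall>\<beta>\<in>PiE (CH rt) RR. C \<beta> = 0"
    by (rule prod_indep[where W="CH rt" and B="\<lambda>w. DU w" and f=Phi and r=r and n=n and C=C, OF finch chdisj ind prem])
  then show "G xk \<alpha> = G' xk \<alpha>" using \<alpha> by (simp add: C_def)
qed

end

context TT begin

abbreviation "QQ Gs w \<equiv> (\<forall>x\<in>XX. \<forall>a\<in>{1..r w}. Phi w (restrict x (DU w)) a =
   (\<Sum>\<gamma>\<in>PiE (DU w) RR. (if \<gamma> w = a then (\<Prod>j\<in>DU w. Gs j (x j) (restrict \<gamma> (nbr_edges d rt par j))) else 0)))"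

lemma nbr_sub:
  assumes c: "c \<in> {1..d} - {rt}" and j: "j \<in> DU c"
  shows "nbr_edges d rt par j \<subseteq> DU c"
proof -
  have "j \<noteq> rt" using j c rtd[of c] by auto
  then show ?thesis using nbr_nonroot chod[OF j] j by auto
qed

lemma comb:
  assumes QC: "\<forall>c\<in>CH k. QQ Gs c" and x: "x \<in> XX"
  shows "(\<Sum>\<beta>\<in>PiE (CH k) RR. (\<Prod>c\<in>CH k. Phi c (restrict x (DU c)) (\<beta> c)) * g \<beta>)
    = (\<Sum>\<gamma>\<in>PiE (desc d rt par k) RR. (\<Prod>c\<in>CH k. \<Prod>j\<in>DU c. Gs j (x j) (restrict \<gamma> (nbr_edges d rt par j))) * g (restrict \<gamma> (CH k)))"
proof -
  define P where "P c \<gamma> = (\<Prod>j\<in>DU c. Gs j (x j) (restrict \<gamma> (nbr_edges d rt par j)))" for c \<gamma>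
  have Prest: "P c (restrict \<gamma> (DU c)) = P c \<gamma>" if c: "c \<in> CH k" for c \<gamma>
    unfolding P_def
  proof (intro prod.cong refl)
    fix j assume j: "j \<in> DU c"
    have c': "c \<in> {1..d} - {rt}" using chin[OF c] by auto
    have "restrict (restrict \<gamma> (DU c)) (nbr_edges d rt par j) = restrict \<gamma> (nbr_edges d rt par j)"
      using nbr_sub[OF c' j] by (auto simp: fun_eq_iff)
    then show "Gs j (x j) (restrict (restrict \<gamma> (DU c)) (nbr_edges d rt par j)) = Gs j (x j) (restrict \<gamma> (nbr_edges d rt par j))"
      by simp
  qed
  have U: "(\<Union>c\<in>CH k. DU c) = desc d rt par k" using dunf[of k] by simp
  have step1: "(\<Prod>c\<in>CH k. Phi c (restrict x (DU c)) (\<beta> c))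
     = (\<Sum>\<gamma>\<in>PiE (desc d rt par k) RR. (if \<forall>c\<in>CH k. \<gamma> c = \<beta> c then (\<Prod>c\<in>CH k. P c \<gamma>) else 0))"
    if \<beta>: "\<beta> \<in> PiE (CH k) RR" for \<beta>
  proof -
    have "(\<Prod>c\<in>CH k. Phi c (restrict x (DU c)) (\<beta> c))
       = (\<Prod>c\<in>CH k. \<Sum>\<gamma>\<in>PiE (DU c) RR. (if \<gamma> c = \<beta> c then P c \<gamma> else 0))"
    proof (intro prod.cong refl)
      fix c assume c: "c \<in> CH k"
      have "\<beta> c \<in> {1..r c}" using \<beta> c by auto
      then show "Phi c (restrict x (DU c)) (\<beta> c) = (\<Sum>\<gamma>\<in>PiE (DU c) RR. (if \<gamma> c = \<beta> c then P c \<gamma> else 0))"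
        using bspec[OF bspec[OF QC c] x] unfolding P_def by blast
    qed
    also have "\<dots> = (\<Sum>\<gamma>\<in>PiE (\<Union>c\<in>CH k. DU c) RR. \<Prod>c\<in>CH k. (if (restrict \<gamma> (DU c)) c = \<beta> c then P c (restrict \<gamma> (DU c)) else 0))"
      by (rule prod_sum_blocks[where B="\<lambda>c. DU c" and F="\<lambda>c \<gamma>. if \<gamma> c = \<beta> c then P c \<gamma> else 0"]) (use finch chdisj in auto)
    also have "\<dots> = (\<Sum>\<gamma>\<in>PiE (desc d rt par k) RR. \<Prod>c\<in>CH k. (if \<gamma> c = \<beta> c then P c \<gamma> else 0))"
      unfolding U
    proof (intro sum.cong refl prod.cong)
      fix \<gamma> :: "nat \<Rightarrow> nat" and c assume c: "c \<in> CH k"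
      have rc: "(restrict \<gamma> (DU c)) c = \<gamma> c" by simp
      show "(if (restrict \<gamma> (DU c)) c = \<beta> c then P c (restrict \<gamma> (DU c)) else 0) = (if \<gamma> c = \<beta> c then P c \<gamma> else 0)"
        by (simp only: Prest[OF c] rc)
    qed
    also have "\<dots> = (\<Sum>\<gamma>\<in>PiE (desc d rt par k) RR. (if \<forall>c\<in>CH k. \<gamma> c = \<beta> c then (\<Prod>c\<in>CH k. P c \<gamma>) else 0))"
      by (intro sum.cong refl) (rule prod_if_all[OF finch])
    finally show ?thesis .
  qed
  have "(\<Sum>\<beta>\<in>PiE (CH k) RR. (\<Prod>c\<in>CH k. Phi c (restrict x (DU c)) (\<beta> c)) * g \<beta>)
     = (\<Sum>\<beta>\<in>PiE (CH k) RR. \<Sum>\<gamma>\<in>PiE (desc d rt par k) RR. (if \<beta> = restrict \<gamma> (CH k) then (\<Prod>c\<in>CH k. P c \<gamma>) * g \<beta> else 0))"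
  proof (intro sum.cong refl)
    fix \<beta> assume \<beta>: "\<beta> \<in> PiE (CH k) RR"
    have eqv: "(\<forall>c\<in>CH k. \<gamma> c = \<beta> c) \<longleftrightarrow> \<beta> = restrict \<gamma> (CH k)" for \<gamma>
      using \<beta> by (auto simp: fun_eq_iff PiE_iff extensional_def)
    show "(\<Prod>c\<in>CH k. Phi c (restrict x (DU c)) (\<beta> c)) * g \<beta>
      = (\<Sum>\<gamma>\<in>PiE (desc d rt par k) RR. (if \<beta> = restrict \<gamma> (CH k) then (\<Prod>c\<in>CH k. P c \<gamma>) * g \<beta> else 0))"
      unfolding step1[OF \<beta>] sum_distrib_right eqv by (intro sum.cong refl) simp
  qed
  also have "\<dots> = (\<Sum>\<gamma>\<in>PiE (desc d rt par k) RR. \<Sum>\<beta>\<in>PiE (CH k) RR. (if \<beta> = restrict \<gamma> (CH k) then (\<Prod>c\<in>CH k. P c \<gamma>) * g \<beta> else 0))"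
    by (rule sum.swap)
  also have "\<dots> = (\<Sum>\<gamma>\<in>PiE (desc d rt par k) RR. (\<Prod>c\<in>CH k. P c \<gamma>) * g (restrict \<gamma> (CH k)))"
  proof (intro sum.cong refl)
    fix \<gamma> assume \<gamma>: "\<gamma> \<in> PiE (desc d rt par k) RR"
    have "restrict \<gamma> (CH k) \<in> PiE (CH k) RR" using \<gamma> chsub[of k] by auto
    then show "(\<Sum>\<beta>\<in>PiE (CH k) RR. (if \<beta> = restrict \<gamma> (CH k) then (\<Prod>c\<in>CH k. P c \<gamma>) * g \<beta> else 0))
      = (\<Prod>c\<in>CH k. P c \<gamma>) * g (restrict \<gamma> (CH k))"
      by (simp add: sum.delta[OF finite_PiE[OF finch]])
  qed
  finally show ?thesis unfolding P_def .
qed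

lemma Q_all:
  assumes Gs: "\<forall>k\<in>{1..d}. cde d rt par n r p Phi k (Gs k)"
  shows "w \<in> {1..d} - {rt} \<Longrightarrow> QQ Gs w"
proof (induction "card (desc d rt par w)" arbitrary: w rule: less_induct)
  case less
  note w = less.prems
  have wd: "w \<in> {1..d}" and wnr: "w \<noteq> rt" using w by auto
  have QC: "\<forall>c\<in>CH w. QQ Gs c"
  proof
    fix c assume c: "c \<in> CH w"
    have "c \<in> {1..d} - {rt}" using chin[OF c] by auto
    then show "QQ Gs c" by (rule less.hyps[OF dcc[OF c]])
  qed
  have INT: "INTc w (Gs w)" using cde_nonroot[OF w] bspec[OF Gs wd] by simp
  let ?F = "\<lambda>\<gamma> j. Gs j (x j) (restrict \<gamma> (nbr_edges d rt par j))"
  show "QQ Gs w"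
  proof (intro ballI)
    fix x a assume x: "x \<in> XX" and a: "a \<in> {1..r w}"
    let ?xw = "restrict x (DU w)"
    let ?F = "\<lambda>\<gamma> j. Gs j (x j) (restrict \<gamma> (nbr_edges d rt par j))"
    have xw: "?xw \<in> idx (DU w) n" by (rule restrict_PiE_sub[OF x DU_sub[OF wd]])
    have "Phi w ?xw a = (\<Sum>\<beta>\<in>PiE (CH w) RR. Phi_children d rt par Phi w ?xw \<beta> * Gs w (?xw w) (\<beta>(w := a)))"
      using bspec[OF bspec[OF INT xw] a] by simp
    also have "\<dots> = (\<Sum>\<beta>\<in>PiE (CH w) RR. (\<Prod>c\<in>CH w. Phi c (restrict x (DU c)) (\<beta> c)) * Gs w (x w) (\<beta>(w := a)))"
    proof (intro sum.cong refl)
      fix \<beta> :: "nat \<Rightarrow> nat"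
      have "restrict ?xw (DU c) = restrict x (DU c)" if "c \<in> CH w" for c
        using dcs[OF that] by (auto simp: fun_eq_iff)
      then show "Phi_children d rt par Phi w ?xw \<beta> * Gs w (?xw w) (\<beta>(w := a))
        = (\<Prod>c\<in>CH w. Phi c (restrict x (DU c)) (\<beta> c)) * Gs w (x w) (\<beta>(w := a))"
        by (simp add: PC_eq)
    qed
    also have "\<dots> = (\<Sum>\<gamma>\<in>PiE (desc d rt par w) RR. (\<Prod>c\<in>CH w. \<Prod>j\<in>DU c. ?F \<gamma> j) * Gs w (x w) ((restrict \<gamma> (CH w))(w := a)))"
      by (rule comb[OF QC x])
    also have "\<dots> = (\<Sum>\<gamma>\<in>PiE (desc d rt par w) RR. \<Prod>j\<in>insert w (desc d rt par w). ?F (\<gamma>(w := a)) j)"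
    proof (intro sum.cong refl)
      fix \<gamma> assume \<gamma>: "\<gamma> \<in> PiE (desc d rt par w) RR"
      have "(\<Prod>j\<in>insert w (desc d rt par w). ?F (\<gamma>(w := a)) j) = ?F (\<gamma>(w := a)) w * (\<Prod>j\<in>desc d rt par w. ?F (\<gamma>(w := a)) j)"
        by (rule prod.insert[OF finite_desc kd])
      also have "?F (\<gamma>(w := a)) w = Gs w (x w) ((restrict \<gamma> (CH w))(w := a))"
        using knch[of w] by (simp add: nbr_nonroot[OF wnr] fun_eq_iff)
      also have "(\<Prod>j\<in>desc d rt par w. ?F (\<gamma>(w := a)) j) = (\<Prod>j\<in>desc d rt par w. ?F \<gamma> j)"
      proof (intro prod.cong refl)
        fix j assume j: "j \<in> desc d rt par w"
        have "w \<notin> nbr_edges d rt par j" using nchod[OF j] j kd[of w] by (auto simp: nbr_edges_def)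
        then show "?F (\<gamma>(w := a)) j = ?F \<gamma> j" by (simp add: upd_restrict)
      qed
      also have "\<dots> = (\<Prod>c\<in>CH w. \<Prod>j\<in>DU c. ?F \<gamma> j)" by (rule prod_desc)
      finally have eq: "(\<Prod>j\<in>insert w (desc d rt par w). ?F (\<gamma>(w := a)) j) = Gs w (x w) ((restrict \<gamma> (CH w))(w := a)) * (\<Prod>c\<in>CH w. \<Prod>j\<in>DU c. ?F \<gamma> j)" .
      show "(\<Prod>c\<in>CH w. \<Prod>j\<in>DU c. ?F \<gamma> j) * Gs w (x w) ((restrict \<gamma> (CH w))(w := a))
         = (\<Prod>j\<in>insert w (desc d rt par w). ?F (\<gamma>(w := a)) j)" by (subst mult.commute) (rule sym[OF eq])
    qed
    also have "\<dots> = (\<Sum>b\<in>RR w. if b = a then (\<Sum>\<gamma>\<in>PiE (desc d rt par w) RR. \<Prod>j\<in>insert w (desc d rt par w). ?F (\<gamma>(w := b)) j) else 0)"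
      using a by (simp add: sum.delta)
    also have "\<dots> = (\<Sum>b\<in>RR w. \<Sum>\<gamma>\<in>PiE (desc d rt par w) RR. (if (\<gamma>(w := b)) w = a then (\<Prod>j\<in>insert w (desc d rt par w). ?F (\<gamma>(w := b)) j) else 0))"
      by (intro sum.cong refl) simp
    also have "\<dots> = (\<Sum>\<gamma>\<in>PiE (insert w (desc d rt par w)) RR. (if \<gamma> w = a then (\<Prod>j\<in>insert w (desc d rt par w). ?F \<gamma> j) else 0))"
      by (rule sum_PiE_insert[OF kd, symmetric])
    also have "insert w (desc d rt par w) = DU w" by simp
    finally show "Phi w ?xw a = (\<Sum>\<gamma>\<in>PiE (DU w) RR. (if \<gamma> w = a then (\<Prod>j\<in>DU w. ?F \<gamma> j) else 0))" .
  qed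
qed

lemma ttns:
  assumes Gs: "\<forall>k\<in>{1..d}. cde d rt par n r p Phi k (Gs k)" and x: "x \<in> XX"
  shows "p x = (\<Sum>\<alpha>\<in>PiE ({1..d} - {rt}) RR. \<Prod>k=1..d. Gs k (x k) (restrict \<alpha> (nbr_edges d rt par k)))"
proof -
  let ?F = "\<lambda>\<gamma> j. Gs j (x j) (restrict \<gamma> (nbr_edges d rt par j))"
  have QC: "\<forall>c\<in>CH rt. QQ Gs c"
  proof
    fix c assume c: "c \<in> CH rt"
    have "c \<in> {1..d} - {rt}" using chin[OF c] by auto
    then show "QQ Gs c" by (rule Q_all[OF Gs])
  qed
  have "p x = (\<Sum>\<beta>\<in>PiE (CH rt) RR. Phi_children d rt par Phi rt x \<beta> * Gs rt (x rt) \<beta>)"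
    using bspec[OF bspec[OF Gs rtin, unfolded cde_root] x] by simp
  also have "\<dots> = (\<Sum>\<beta>\<in>PiE (CH rt) RR. (\<Prod>c\<in>CH rt. Phi c (restrict x (DU c)) (\<beta> c)) * Gs rt (x rt) \<beta>)"
    by (simp add: PC_eq)
  also have "\<dots> = (\<Sum>\<gamma>\<in>PiE (desc d rt par rt) RR. (\<Prod>c\<in>CH rt. \<Prod>j\<in>DU c. ?F \<gamma> j) * Gs rt (x rt) (restrict \<gamma> (CH rt)))"
    by (rule comb[OF QC x])
  also have "\<dots> = (\<Sum>\<gamma>\<in>PiE ({1..d} - {rt}) RR. \<Prod>k=1..d. ?F \<gamma> k)"
    unfolding drt[symmetric]
  proof (intro sum.cong refl)
    fix \<gamma> assume \<gamma>: "\<gamma> \<in> PiE (desc d rt par rt) RR"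
    have "(\<Prod>k=1..d. ?F \<gamma> k) = ?F \<gamma> rt * (\<Prod>k\<in>{1..d} - {rt}. ?F \<gamma> k)"
      by (rule prod.remove[OF finite_atLeastAtMost rtin])
    also have "(\<Prod>k\<in>{1..d} - {rt}. ?F \<gamma> k) = (\<Prod>c\<in>CH rt. \<Prod>j\<in>DU c. ?F \<gamma> j)"
      unfolding drt[symmetric] by (rule prod_desc)
    also have "?F \<gamma> rt = Gs rt (x rt) (restrict \<gamma> (CH rt))" by (simp only: nbr_root)
    finally have eq: "(\<Prod>k=1..d. ?F \<gamma> k) = Gs rt (x rt) (restrict \<gamma> (CH rt)) * (\<Prod>c\<in>CH rt. \<Prod>j\<in>DU c. ?F \<gamma> j)" .
    show "(\<Prod>c\<in>CH rt. \<Prod>j\<in>DU c. ?F \<gamma> j) * Gs rt (x rt) (restrict \<gamma> (CH rt)) = (\<Prod>k=1..d. ?F \<gamma> k)"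
      by (subst mult.commute) (rule sym[OF eq])
  qed
  finally show ?thesis .
qed

end

theorem theorem1:
  fixes d rt :: nat and par n r :: "nat \<Rightarrow> nat"
    and p :: "(nat \<Rightarrow> nat) \<Rightarrow> real"
    and Phi :: "nat \<Rightarrow> (nat \<Rightarrow> nat) \<Rightarrow> nat \<Rightarrow> real"
    and Psi :: "nat \<Rightarrow> nat \<Rightarrow> (nat \<Rightarrow> nat) \<Rightarrow> real"
  assumes tree: "rooted_tree d rt par"
    and r_pos: "\<forall>w \<in> {1..d} - {rt}. r w > 0"
    and factor: "\<forall>w \<in> {1..d} - {rt}. \<forall>x \<in> idx {1..d} n.
        p x = (\<Sum>a = 1..r w. Phi w (restrict x (desc d rt par w \<union> {w})) a
                              * Psi w a (restrict x (nondesc d rt par w)))"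
    and rank: "\<forall>w \<in> {1..d} - {rt}.
        unfolding_rank n p (desc d rt par w \<union> {w}) (nondesc d rt par w) = r w"
  shows "(\<forall>k \<in> {1..d}. \<exists>G. cde d rt par n r p Phi k G \<and>
            (\<forall>G'. cde d rt par n r p Phi k G' \<longrightarrow> same_core d rt par n r k G G'))
    \<and> (\<forall>Gs. (\<forall>k \<in> {1..d}. cde d rt par n r p Phi k (Gs k)) \<longrightarrow>
         (\<forall>x \<in> idx {1..d} n.
            p x = (\<Sum>\<alpha> \<in> PiE ({1..d} - {rt}) (\<lambda>e. {1..r e}).
                     \<Prod>k = 1..d. Gs k (x k) (restrict \<alpha> (nbr_edges d rt par k)))))"
proof -
  interpret TTi: TT d rt par n r p Phi Psi
    by (intro TT.intro tree r_pos factor rank)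
  show ?thesis
  proof (intro conjI)
    show "\<forall>k \<in> {1..d}. \<exists>G. cde d rt par n r p Phi k G \<and>
            (\<forall>G'. cde d rt par n r p Phi k G' \<longrightarrow> same_core d rt par n r k G G')"
    proof
      fix k assume k: "k \<in> {1..d}"
      show "\<exists>G. cde d rt par n r p Phi k G \<and>
            (\<forall>G'. cde d rt par n r p Phi k G' \<longrightarrow> same_core d rt par n r k G G')"
      proof (cases "k = rt")
        case True
        obtain G where G: "cde d rt par n r p Phi rt G" using TTi.exists_root by blast
        show ?thesis
          using G TTi.unique_root[OF G] True by blast
      next
        case False
        then have k': "k \<in> {1..d} - {rt}" using k by simp
        obtain G where G: "TTi.INTc k G" using TTi.exists_nonroot[OF k'] by blast
        have "cde d rt par n r p Phi k G" using G TTi.cde_nonroot[OF k'] by simp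
        moreover have "\<forall>G'. cde d rt par n r p Phi k G' \<longrightarrow> same_core d rt par n r k G G'"
        proof (intro allI impI)
          fix G' assume "cde d rt par n r p Phi k G'"
          then have "TTi.INTc k G'" using TTi.cde_nonroot[OF k'] by simp
          then show "same_core d rt par n r k G G'" by (rule TTi.unique_nonroot[OF k' G])
        qed
        ultimately show ?thesis by blast
      qed
    qed
  next
    show "\<forall>Gs. (\<forall>k \<in> {1..d}. cde d rt par n r p Phi k (Gs k)) \<longrightarrow>
         (\<forall>x \<in> idx {1..d} n.
            p x = (\<Sum>\<alpha> \<in> PiE ({1..d} - {rt}) (\<lambda>e. {1..r e}).
                     \<Prod>k = 1..d. Gs k (x k) (restrict \<alpha> (nbr_edges d rt par k))))"
      using TTi.ttns by blast
  qed
qed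

end
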